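(* Let $m\ge4$ and let $T^m(x)=1+\sum_{n\ge1}t_nx^n$ be the cluster generating function for the consecutive pattern $\tau_m=1\,m\,2\,3\cdots(m-2)(m-1)$ (defined in the context), which satisfies \[T^m(x) = 1 + \frac{x}{1+x}\,T^m\!\left(\frac{x}{1+x^{m-2}}\right).\] Let $B^m(x)=\frac{x}{1+x^{m-2}}$, $B^m_0(x)=x$ and $B^m_j(x)=B^m(B^m_{j-1}(x))$ for $j\ge1$. Then this functional equation has the solution \[T^m(x) = 1 + \sum_{n=0}^\infty \prod_{j=0}^n \frac{B^m_j(x)}{1+B^m_j(x)},\] the infinite sum converging as a formal power series in $x$.
   Context: For a consecutive pattern $\sigma$ of length $m$: an occurrence of $\sigma$ in a permutation is a block of $m$ consecutive positions whose entries have the same relative order as $\sigma$. A $k$-cluster of length $n\ge m$ is a permutation of $\{1,\dots,n\}$ containing precisely $k$ occurrences of $\sigma$, such that every entry lies in at least one occurrence and any two successive occurrences overlap in at least one position. Let $s_{n,k}$ be the number of $k$-clusters of length $n$, with $s_{1,0}=1$ and $s_{n,k}=0$ otherwise for $n<m$. Set $t_n=\sum_k(-1)^ks_{n,k}$ and define the cluster generating function $T(x)=1+\sum_{n\ge1}t_nx^n$. Here $\sigma=\tau_m=1\,m\,2\,3\cdots(m-1)$, e.g. $\tau_4=1423$, $\tau_5=15234$. *)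

theory Defs
  imports "HOL-Computational_Algebra.Formal_Power_Series"
begin

definition order_iso :: "nat list \<Rightarrow> nat list \<Rightarrow> bool" where
  "order_iso xs ys \<longleftrightarrow> length xs = length ys \<and>
     (\<forall>i < length xs. \<forall>j < length xs. (xs ! i < xs ! j) = (ys ! i < ys ! j))"

definition occs :: "nat list \<Rightarrow> nat list \<Rightarrow> nat set" where
  "occs sigma p = {i. i + length sigma \<le> length p \<and>
                      order_iso (take (length sigma) (drop i p)) sigma}"

definition perms :: "nat \<Rightarrow> nat list set" where
  "perms n = {p. distinct p \<and> set p = {1..n}}"

definition is_cluster :: "nat list \<Rightarrow> nat list \<Rightarrow> bool" where
  "is_cluster sigma p \<longleftrightarrow>
     (\<forall>j < length p. \<exists>i \<in> occs sigma p. i \<le> j \<and> j < i + length sigma) \<and>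
     (\<forall>i \<in> occs sigma p. \<forall>i' \<in> occs sigma p.
        i < i' \<and> (\<forall>l \<in> occs sigma p. \<not> (i < l \<and> l < i')) \<longrightarrow> i' < i + length sigma)"

definition s_cl :: "nat list \<Rightarrow> nat \<Rightarrow> nat \<Rightarrow> nat" where
  "s_cl sigma n k =
     (if n < length sigma then (if n = 1 \<and> k = 0 then 1 else 0)
      else card {p \<in> perms n. is_cluster sigma p \<and> card (occs sigma p) = k})"

text \<open>t_n = sum_k (-1)^k s_{n,k}; a permutation of length n has at most n occurrences.\<close>
definition t_cl :: "nat list \<Rightarrow> nat \<Rightarrow> int" where
  "t_cl sigma n = (\<Sum>k\<le>n. (-1) ^ k * int (s_cl sigma n k))"

definition T_cl :: "nat list \<Rightarrow> rat fps" where
  "T_cl sigma = Abs_fps (\<lambda>n. if n = 0 then 1 else of_int (t_cl sigma n))"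

definition tau :: "nat \<Rightarrow> nat list" where
  "tau m = [1, m] @ [2..<m]"

definition Bm :: "nat \<Rightarrow> rat fps" where
  "Bm m = fps_X / (1 + fps_X ^ (m - 2))"

definition Bmj :: "nat \<Rightarrow> nat \<Rightarrow> rat fps" where
  "Bmj m j = ((\<lambda>f. fps_compose (Bm m) f) ^^ j) fps_X"

end

theory Submission
  imports Defs
begin

definition pcons :: "nat \<Rightarrow> nat list \<Rightarrow> nat list" where
  "pcons v q = v # map (\<lambda>x. if v \<le> x then Suc x else x) q"

definition pdec :: "nat list \<Rightarrow> nat list" where
  "pdec p = map (\<lambda>x. if hd p < x then x - 1 else x) (tl p)"

lemma perms_length: "p \<in> perms n \<Longrightarrow> length p = n"
proof -
  assume "p \<in> perms n"
  then have "distinct p" "set p = {1..n}" by (auto simp: perms_def)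
  then show ?thesis using distinct_card[of p] by simp
qed

lemma finite_perms: "finite (perms n)"
proof -
  have "perms n \<subseteq> {xs. set xs \<subseteq> {1..n} \<and> length xs = n}"
    using perms_length unfolding perms_def by auto
  moreover have "finite {xs. set xs \<subseteq> {1..n} \<and> length xs = n}"
    by (rule finite_lists_length_eq) simp
  ultimately show ?thesis by (rule finite_subset)
qed

lemma pdec_pcons [simp]: "pdec (pcons v q) = q"
  unfolding pdec_def pcons_def by (induction q) auto

lemma hd_pcons [simp]: "hd (pcons v q) = v"
  unfolding pcons_def by simp

lemma length_pcons [simp]: "length (pcons v q) = Suc (length q)"
  unfolding pcons_def by simp

lemma pcons_perms:
  assumes v: "v \<in> {1..Suc n}" and q: "q \<in> perms n"
  shows "pcons v q \<in> perms (Suc n)"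
proof -
  let ?f = "\<lambda>x. if v \<le> x then Suc x else x"
  have inj: "inj ?f"
  proof (rule injI)
    fix x y assume "?f x = ?f y" then show "x = y" by (simp split: if_splits)
  qed
  have dq: "distinct q" "set q = {1..n}" using q by (auto simp: perms_def)
  have "v \<notin> ?f ` set q" by auto
  moreover have "distinct (map ?f q)" using dq inj by (simp add: distinct_map inj_on_subset[OF inj])
  moreover have "insert v (?f ` {1..n}) = {1..Suc n}"
  proof (rule set_eqI)
    fix x show "x \<in> insert v (?f ` {1..n}) \<longleftrightarrow> x \<in> {1..Suc n}"
    proof
      assume "x \<in> insert v (?f ` {1..n})" then show "x \<in> {1..Suc n}" using v by auto
    next
      assume x: "x \<in> {1..Suc n}"
      show "x \<in> insert v (?f ` {1..n})"
      proof (cases "x < v")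
        case True then have "?f x = x" by simp
        moreover have "x \<in> {1..n}" using True x v by auto
        ultimately show ?thesis by (intro insertI2 rev_image_eqI[of x]) simp_all
      next
        case False
        show ?thesis
        proof (cases "x = v")
          case True then show ?thesis by simp
        next
          case False': False
          then have "x > v" using False by simp
          then have "?f (x - 1) = x" "x - 1 \<in> {1..n}" using v x by auto
          then show ?thesis by (intro insertI2 rev_image_eqI[of "x - 1"]) simp_all
        qed
      qed
    qed
  qed
  ultimately have "distinct (pcons v q)" "set (pcons v q) = {1..Suc n}"
    unfolding pcons_def using dq by (simp_all only: distinct.simps set_map list.set) simp_all
  then show ?thesis unfolding perms_def by (rule CollectI[of _ "pcons v q", OF conjI])
qed

lemma pdec_perms:
  assumes p: "p \<in> perms (Suc n)"
  shows "pdec p \<in> perms n" "pcons (hd p) (pdec p) = p" "hd p \<in> {1..Suc n}"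
proof -
  obtain v q where pq: "p = v # q" using perms_length[OF p] by (cases p) auto
  have d: "distinct (v # q)" "set (v # q) = {1..Suc n}" using p pq by (auto simp: perms_def)
  let ?g = "\<lambda>x. if v < x then x - 1 else x"
  show "hd p \<in> {1..Suc n}" using d pq by auto
  have "map (\<lambda>x. if v \<le> x then Suc x else x) (map ?g q) = q"
    unfolding map_map
  proof (rule map_idI)
    fix y assume y: "y \<in> set q"
    have "y \<noteq> v" using d y by auto
    then show "((\<lambda>x. if v \<le> x then Suc x else x) \<circ> ?g) y = y" by auto
  qed
  then show "pcons (hd p) (pdec p) = p" unfolding pcons_def pdec_def pq by simp
  have inj: "inj_on ?g (set q)"
  proof (rule inj_onI)
    fix x y assume xy: "x \<in> set q" "y \<in> set q" "?g x = ?g y"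
    have "x \<noteq> v" "y \<noteq> v" using d xy by auto
    then show "x = y" using xy(3) by (auto split: if_splits)
  qed
  have "distinct (map ?g q)" using d inj by (simp add: distinct_map)
  moreover have "?g ` set q = {1..n}"
  proof (rule set_eqI)
    fix x show "x \<in> ?g ` set q \<longleftrightarrow> x \<in> {1..n}"
    proof
      assume "x \<in> ?g ` set q"
      then obtain y where y: "y \<in> set q" "x = ?g y" by auto
      have "y \<noteq> v" "y \<in> {1..Suc n}" "v \<in> {1..Suc n}" using d y by auto
      then show "x \<in> {1..n}" using y by auto
    next
      assume x: "x \<in> {1..n}"
      show "x \<in> ?g ` set q"
      proof (cases "x < v")
        case True
        then have "x \<in> set q" using x d by auto
        then show ?thesis using True by force
      next
        case False
        then have "Suc x \<in> set q" using x d by auto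
        moreover have "?g (Suc x) = x" using False by simp
        ultimately show ?thesis by (intro rev_image_eqI[of "Suc x"]) simp_all
      qed
    qed
  qed
  moreover have "pdec p = map ?g q" unfolding pdec_def pq by simp
  ultimately have "distinct (pdec p)" "set (pdec p) = {1..n}" by simp_all
  then show "pdec p \<in> perms n" unfolding perms_def by (rule CollectI[of _ "pdec p", OF conjI])
qed

lemma pcons_inj: "pcons v q = pcons v' q' \<Longrightarrow> v = v' \<and> q = q'"
proof -
  assume "pcons v q = pcons v' q'"
  then have "hd (pcons v q) = hd (pcons v' q')" "pdec (pcons v q) = pdec (pcons v' q')" by auto
  then show ?thesis by (simp only: hd_pcons pdec_pcons)
qed

lemma oi_refl: "order_iso xs xs"
  unfolding order_iso_def by simp

lemma oi_sym: "order_iso xs ys \<Longrightarrow> order_iso ys xs"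
  unfolding order_iso_def by simp

lemma oi_trans: "order_iso xs ys \<Longrightarrow> order_iso ys zs \<Longrightarrow> order_iso xs zs"
  unfolding order_iso_def by simp

lemma oi_nth: "order_iso xs ys \<Longrightarrow> i < length xs \<Longrightarrow> j < length xs \<Longrightarrow> (xs ! i < xs ! j) = (ys ! i < ys ! j)"
  unfolding order_iso_def by blast

lemma oi_length: "order_iso xs ys \<Longrightarrow> length xs = length ys"
  unfolding order_iso_def by blast

lemma oi_map:
  assumes "\<And>x y. x \<in> set xs \<Longrightarrow> y \<in> set xs \<Longrightarrow> x < y \<Longrightarrow> f x < f y"
  shows "order_iso (map f xs) xs"
  unfolding order_iso_def
proof (intro conjI allI impI)
  fix i j assume i: "i < length (map f xs)" and j: "j < length (map f xs)"
  have s: "xs ! i \<in> set xs" "xs ! j \<in> set xs" using i j by simp_all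
  show "(map f xs ! i < map f xs ! j) = (xs ! i < xs ! j)"
  proof
    assume "map f xs ! i < map f xs ! j"
    then have lt: "f (xs ! i) < f (xs ! j)" using i j by simp
    show "xs ! i < xs ! j"
    proof (rule ccontr)
      assume "\<not> xs ! i < xs ! j"
      then have "xs ! j < xs ! i \<or> xs ! j = xs ! i" by auto
      then show False using assms[OF s(2) s(1)] lt by auto
    qed
  next
    assume "xs ! i < xs ! j" then show "map f xs ! i < map f xs ! j" using assms[OF s] i j by simp
  qed
qed simp

lemma oi_take: "order_iso xs ys \<Longrightarrow> order_iso (take a xs) (take a ys)"
  unfolding order_iso_def by auto

lemma oi_drop: "order_iso xs ys \<Longrightarrow> order_iso (drop b xs) (drop b ys)"
  unfolding order_iso_def by auto

lemma occs_oi: "order_iso p p' \<Longrightarrow> occs sigma p = occs sigma p'"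
proof -
  assume o: "order_iso p p'"
  have l: "length p = length p'" using o by (rule oi_length)
  have "order_iso (take (length sigma) (drop i p)) (take (length sigma) (drop i p'))" for i
    using o by (intro oi_take oi_drop)
  then have "order_iso (take (length sigma) (drop i p)) sigma = order_iso (take (length sigma) (drop i p')) sigma" for i
    by (meson oi_sym oi_trans)
  then show ?thesis unfolding occs_def using l by simp
qed

lemma occs_Cons: "Suc i \<in> occs sigma (x # xs) \<longleftrightarrow> i \<in> occs sigma xs"
  unfolding occs_def by simp

lemma occs_drop: "g \<le> length p \<Longrightarrow> i \<in> occs sigma (drop g p) \<longleftrightarrow> i + g \<in> occs sigma p"
  unfolding occs_def by (auto simp: add.commute)

lemma occs_pcons: "Suc i \<in> occs sigma (pcons v q) \<longleftrightarrow> i \<in> occs sigma q"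
proof -
  have "order_iso (map (\<lambda>x. if v \<le> x then Suc x else x) q) q"
    by (rule oi_map) auto
  then have "occs sigma (map (\<lambda>x. if v \<le> x then Suc x else x) q) = occs sigma q"
    by (rule occs_oi)
  then show ?thesis unfolding pcons_def using occs_Cons by blast
qed

lemma is_cluster_oi: "order_iso p p' \<Longrightarrow> is_cluster sigma p = is_cluster sigma p'"
  unfolding is_cluster_def using occs_oi[of p p' sigma] oi_length[of p p'] by simp

lemma pdec_oi:
  assumes "distinct p" "p \<noteq> []"
  shows "order_iso (pdec p) (tl p)"
  unfolding pdec_def
proof (rule oi_map)
  fix x y assume xy: "x \<in> set (tl p)" "y \<in> set (tl p)" "x < y"
  have "x \<noteq> hd p" "y \<noteq> hd p" using assms xy by (cases p; auto)+
  then show "(if hd p < x then x - 1 else x) < (if hd p < y then y - 1 else y)"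
    using xy(3) by auto
qed

lemma pdec_pow:
  assumes p: "p \<in> perms n" and j: "j \<le> n"
  shows "(pdec ^^ j) p \<in> perms (n - j) \<and> order_iso ((pdec ^^ j) p) (drop j p)"
  using j
proof (induction j)
  case 0 then show ?case using p by (simp add: oi_refl)
next
  case (Suc j)
  let ?x = "(pdec ^^ j) p"
  have x: "?x \<in> perms (Suc (n - Suc j))" and o: "order_iso ?x (drop j p)"
    using Suc by (simp_all add: Suc_diff_Suc)
  have dx: "distinct ?x" "?x \<noteq> []" using x perms_length[OF x] by (auto simp: perms_def)
  have "order_iso (pdec ?x) (tl ?x)" using pdec_oi[OF dx] .
  moreover have "order_iso (tl ?x) (drop (Suc j) p)"
    using oi_drop[OF o, of 1] by (simp add: drop_Suc)
  ultimately have "order_iso (pdec ?x) (drop (Suc j) p)" by (rule oi_trans)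
  then show ?case using pdec_perms(1)[OF x] by simp
qed

lemma hd_one_iff:
  assumes p: "p \<in> perms (Suc n)"
  shows "hd p = 1 \<longleftrightarrow> (\<forall>i < Suc n. 0 < i \<longrightarrow> p ! 0 < p ! i)"
proof -
  have l: "length p = Suc n" using perms_length[OF p] .
  have d: "distinct p" "set p = {1..Suc n}" using p by (auto simp: perms_def)
  have hd: "hd p = p ! 0" using l by (cases p) auto
  show ?thesis
  proof
    assume h: "hd p = 1"
    show "\<forall>i < Suc n. 0 < i \<longrightarrow> p ! 0 < p ! i"
    proof (intro allI impI)
      fix i assume i: "i < Suc n" "0 < i"
      have "p ! i \<in> {1..Suc n}" using d l i by (metis nth_mem)
      moreover have "p ! i \<noteq> p ! 0" using d l i by (simp add: nth_eq_iff_index_eq)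
      ultimately show "p ! 0 < p ! i" using h hd by auto
    qed
  next
    assume a: "\<forall>i < Suc n. 0 < i \<longrightarrow> p ! 0 < p ! i"
    have "1 \<in> set p" using d by simp
    then obtain i where i: "i < Suc n" "p ! i = 1" using l by (metis in_set_conv_nth)
    show "hd p = 1"
    proof (cases "i = 0")
      case True then show ?thesis using i hd by simp
    next
      case False then have "p ! 0 < 1" using a i by fastforce
      moreover have "p ! 0 \<in> {1..Suc n}" using d l by (metis nth_mem zero_less_Suc)
      ultimately show ?thesis by simp
    qed
  qed
qed

lemma tau_length: "m \<ge> 2 \<Longrightarrow> length (tau m) = m"
  unfolding tau_def by simp

lemma tau_nth0 [simp]: "tau m ! 0 = 1" unfolding tau_def by simp
lemma tau_nth1: "tau m ! 1 = m" unfolding tau_def by simp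
lemma tau_nth1' [simp]: "tau m ! Suc 0 = m" unfolding tau_def by simp
lemma tau_nthj: "2 \<le> j \<Longrightarrow> j < m \<Longrightarrow> tau m ! j = j"
  unfolding tau_def by (simp add: nth_append)

lemma run_lemma:
  assumes "\<And>j. 2 \<le> j \<Longrightarrow> Suc j < m \<Longrightarrow> f j < (f (Suc j) :: nat)"
  shows "2 \<le> a \<Longrightarrow> a < b \<Longrightarrow> b < m \<Longrightarrow> f a < f b"
proof (induction b)
  case 0 then show ?case by simp
next
  case (Suc b)
  show ?case
  proof (cases "a = b")
    case True then show ?thesis using assms Suc.prems by simp
  next
    case False
    then have "f a < f b" using Suc by simp
    also have "f b < f (Suc b)" using assms Suc.prems False by simp
    finally show ?thesis .
  qed
qed

lemma win_char:
  assumes m: "m \<ge> 3" and len: "length xs = m" and d: "distinct xs"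
  shows "order_iso xs (tau m) \<longleftrightarrow>
    (\<forall>j. 0 < j \<and> j < m \<longrightarrow> xs ! 0 < xs ! j) \<and>
    (\<forall>j. 1 < j \<and> j < m \<longrightarrow> xs ! j < xs ! 1) \<and>
    (\<forall>j. 2 \<le> j \<and> Suc j < m \<longrightarrow> xs ! j < xs ! Suc j)"
  (is "?L \<longleftrightarrow> ?A \<and> ?B \<and> ?C")
proof
  assume L: ?L
  have o: "i < m \<Longrightarrow> j < m \<Longrightarrow> (xs ! i < xs ! j) = (tau m ! i < tau m ! j)" for i j
    using oi_nth[OF L] len by simp
  show "?A \<and> ?B \<and> ?C"
  proof (intro conjI allI impI)
    fix j assume j: "0 < j \<and> j < m"
    have "tau m ! 0 < tau m ! j"
      using j m by (cases "j = 1") (simp_all add: tau_nth0 tau_nth1 tau_nth1' tau_nthj)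
    then show "xs ! 0 < xs ! j" using o j by simp
  next
    fix j assume j: "1 < j \<and> j < m"
    have "tau m ! j < tau m ! 1" using j by (simp add: tau_nth1 tau_nth1' tau_nthj)
    then show "xs ! j < xs ! 1" using o j by simp
  next
    fix j assume j: "2 \<le> j \<and> Suc j < m"
    have "tau m ! j < tau m ! Suc j" using j by (simp add: tau_nthj)
    then show "xs ! j < xs ! Suc j" using o j by simp
  qed
next
  assume R: "?A \<and> ?B \<and> ?C"
  have run: "2 \<le> a \<Longrightarrow> a < b \<Longrightarrow> b < m \<Longrightarrow> xs ! a < xs ! b" for a b
    using run_lemma[of m "\<lambda>j. xs ! j"] R by blast
  have ne: "i < m \<Longrightarrow> j < m \<Longrightarrow> i \<noteq> j \<Longrightarrow> xs ! i \<noteq> xs ! j" for i j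
    using d len by (simp add: nth_eq_iff_index_eq)
  have tv: "j < m \<Longrightarrow> tau m ! j = (if j = 0 then 1 else if j = 1 then m else j)" for j
    by (simp add: tau_nth0 tau_nth1 tau_nthj)
  show ?L unfolding order_iso_def
  proof (intro conjI allI impI)
    show "length xs = length (tau m)" using len m by (simp add: tau_length)
  next
    fix i j assume i: "i < length xs" and j: "j < length xs"
    then have i': "i < m" and j': "j < m" using len by simp_all
    show "(xs ! i < xs ! j) = (tau m ! i < tau m ! j)"
    proof (cases "i = j")
      case True then show ?thesis by simp
    next
      case False
      note n = ne[OF i' j' False]
      consider "i = 0" | "j = 0" | "i = 1" "j \<ge> 2" | "i \<ge> 2" "j = 1" | "i \<ge> 2" "j \<ge> 2"
        using False by linarith
      then show ?thesis
      proof cases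
        case 1 then show ?thesis using R j' False m by (auto simp: tv[OF i'] tv[OF j'])
      next
        case 2 then show ?thesis using R i' False m by (auto simp: tv[OF i'] tv[OF j'])
      next
        case 3
        have "xs ! j < xs ! 1" using R 3 j' by simp
        then show ?thesis using 3 j' by (simp add: tv[OF i'] tv[OF j'])
      next
        case 4
        have "xs ! i < xs ! 1" using R 4 i' by simp
        then show ?thesis using 4 i' by (simp add: tv[OF i'] tv[OF j'])
      next
        case 5
        have "xs ! i < xs ! j \<longleftrightarrow> i < j"
        proof
          assume "xs ! i < xs ! j"
          then show "i < j" using run[of j i] 5 i' j' False by (cases "i < j") auto
        next
          assume "i < j" then show "xs ! i < xs ! j" using run 5 j' by blast
        qed
        then show ?thesis using 5 i' j' by (simp add: tv[OF i'] tv[OF j'])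
      qed
    qed
  qed
qed

lemma occ_char:
  assumes m: "m \<ge> 3" and d: "distinct p"
  shows "i \<in> occs (tau m) p \<longleftrightarrow> i + m \<le> length p \<and>
    (\<forall>j. 0 < j \<and> j < m \<longrightarrow> p ! i < p ! (i + j)) \<and>
    (\<forall>j. 1 < j \<and> j < m \<longrightarrow> p ! (i + j) < p ! (i + 1)) \<and>
    (\<forall>j. 2 \<le> j \<and> Suc j < m \<longrightarrow> p ! (i + j) < p ! (i + Suc j))"
proof (cases "i + m \<le> length p")
  case True
  let ?w = "take m (drop i p)"
  have len: "length ?w = m" using True by simp
  have dw: "distinct ?w" using d by (simp add: distinct_take distinct_drop)
  have nth: "j < m \<Longrightarrow> ?w ! j = p ! (i + j)" for j using True by simp
  have "i \<in> occs (tau m) p \<longleftrightarrow> order_iso ?w (tau m)"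
    unfolding occs_def using True m by (simp add: tau_length)
  also have "\<dots> \<longleftrightarrow> (\<forall>j. 0 < j \<and> j < m \<longrightarrow> ?w ! 0 < ?w ! j) \<and>
    (\<forall>j. 1 < j \<and> j < m \<longrightarrow> ?w ! j < ?w ! 1) \<and>
    (\<forall>j. 2 \<le> j \<and> Suc j < m \<longrightarrow> ?w ! j < ?w ! Suc j)"
    by (rule win_char[OF m len dw])
  also have "\<dots> \<longleftrightarrow> (\<forall>j. 0 < j \<and> j < m \<longrightarrow> p ! i < p ! (i + j)) \<and>
    (\<forall>j. 1 < j \<and> j < m \<longrightarrow> p ! (i + j) < p ! (i + 1)) \<and>
    (\<forall>j. 2 \<le> j \<and> Suc j < m \<longrightarrow> p ! (i + j) < p ! (i + Suc j))"
    using nth m by (auto simp del: nth_take)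
  finally show ?thesis using True by simp
next
  case False
  then show ?thesis unfolding occs_def using m by (simp add: tau_length)
qed

lemma occ_run:
  assumes m: "m \<ge> 3" and d: "distinct p" and i: "i \<in> occs (tau m) p"
  shows "2 \<le> a \<Longrightarrow> a < b \<Longrightarrow> b < m \<Longrightarrow> p ! (i + a) < p ! (i + b)"
  using run_lemma[of m "\<lambda>j. p ! (i + j)"] occ_char[OF m d, of i] i by blast

lemma overlap:
  assumes m: "m \<ge> 4" and d: "distinct p" and i: "i \<in> occs (tau m) p" and i': "i' \<in> occs (tau m) p"
    and lt: "i < i'" "i' < i + m"
  shows "i' = i + (m - 2) \<or> i' = i + (m - 1)"
proof (rule ccontr)
  assume nc: "\<not> ?thesis"
  have m3: "m \<ge> 3" using m by simp
  note ci = occ_char[OF m3 d, of i] and ci' = occ_char[OF m3 d, of i']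
  show False
  proof (cases "i' = i + 1")
    case True
    have "p ! (i + 2) < p ! (i + 1)" using ci i m by auto
    moreover have "p ! i' < p ! (i' + 1)" using ci' i' m by auto
    ultimately show False using True by simp
  next
    case False
    define dd where "dd = i' - i"
    have dd: "2 \<le> dd" "dd + 3 \<le> m" using lt nc False m unfolding dd_def by auto
    have "p ! (i + (dd + 1)) < p ! (i + (dd + 2))" using occ_run[OF m3 d i, of "dd+1" "dd+2"] dd by simp
    moreover have "p ! (i' + 2) < p ! (i' + 1)" using ci' i' m by auto
    moreover have "i' = i + dd" using lt unfolding dd_def by simp
    ultimately show False by (simp add: add.assoc)
  qed
qed

lemma is_cluster_tau:
  assumes "m \<ge> 2"
  shows "is_cluster (tau m) p \<longleftrightarrow>
    (\<forall>j < length p. \<exists>i \<in> occs (tau m) p. i \<le> j \<and> j < i + m) \<and>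
    (\<forall>i \<in> occs (tau m) p. \<forall>i' \<in> occs (tau m) p.
        i < i' \<and> (\<forall>l \<in> occs (tau m) p. \<not> (i < l \<and> l < i')) \<longrightarrow> i' < i + m)"
  unfolding is_cluster_def using assms by (simp add: tau_length)

lemma occs_bound: "m \<ge> 2 \<Longrightarrow> i \<in> occs (tau m) p \<Longrightarrow> i + m \<le> length p"
  unfolding occs_def by (simp add: tau_length)

lemma cl_zero:
  assumes m: "m \<ge> 2" and c: "is_cluster (tau m) p" and l: "length p \<ge> 1"
  shows "0 \<in> occs (tau m) p"
proof -
  obtain i where "i \<in> occs (tau m) p" "i \<le> 0" using c l unfolding is_cluster_tau[OF m] by force
  then show ?thesis by simp
qed

lemma cl_single:
  assumes m: "m \<ge> 2" and c: "is_cluster (tau m) p" and l: "length p \<ge> 1"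
    and s: "\<forall>i \<in> occs (tau m) p. i = 0"
  shows "length p \<le> m"
proof -
  obtain i where "i \<in> occs (tau m) p" "i \<le> length p - 1" "length p - 1 < i + m"
    using c l unfolding is_cluster_tau[OF m] by (meson diff_less zero_less_one less_le_trans)
  then show ?thesis using s by force
qed

lemma cl_single_back:
  assumes m: "m \<ge> 2" and s: "occs (tau m) p = {0}" and l: "length p \<le> m"
  shows "is_cluster (tau m) p"
  unfolding is_cluster_tau[OF m] using s l by auto

lemma cl_next:
  assumes m: "m \<ge> 4" and d: "distinct p" and c: "is_cluster (tau m) p"
    and ex: "\<exists>i \<in> occs (tau m) p. i \<noteq> 0"
  obtains g where "g \<in> occs (tau m) p" "0 < g" "\<forall>i \<in> occs (tau m) p. 0 < i \<longrightarrow> g \<le> i"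
    "g = m - 2 \<or> g = m - 1"
proof -
  let ?O = "occs (tau m) p"
  define g where "g = (LEAST i. i \<in> ?O \<and> i \<noteq> 0)"
  have "g \<in> ?O \<and> g \<noteq> 0" unfolding g_def by (rule LeastI_ex) (use ex in blast)
  then have g: "g \<in> ?O" "g \<noteq> 0" by simp_all
  have gmin: "\<forall>i \<in> ?O. 0 < i \<longrightarrow> g \<le> i" unfolding g_def by (auto intro: Least_le)
  have l: "length p \<ge> 1" using g occs_bound[of m g p] m by simp
  have z: "0 \<in> ?O" using cl_zero[of m p] m c l by simp
  have "g < 0 + m"
  proof -
    have "\<forall>l \<in> ?O. \<not> (0 < l \<and> l < g)" using gmin by auto
    moreover have m2: "m \<ge> 2" using m by simp
    ultimately have nb: "\<forall>l \<in> ?O. \<not> (0 < l \<and> l < g)" by simp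
    have "\<forall>i \<in> ?O. \<forall>i' \<in> ?O. i < i' \<and> (\<forall>l \<in> ?O. \<not> (i < l \<and> l < i')) \<longrightarrow> i' < i + m"
      using c unfolding is_cluster_tau[OF m2] by blast
    then have "0 < g \<and> (\<forall>l \<in> ?O. \<not> (0 < l \<and> l < g)) \<longrightarrow> g < 0 + m" using z g(1) by blast
    then show ?thesis using nb g by simp
  qed
  then have "g = 0 + (m - 2) \<or> g = 0 + (m - 1)" using overlap[OF m d z g(1)] g by simp
  then show ?thesis using that g gmin by simp
qed

lemma cl_drop:
  assumes m: "m \<ge> 2" and c: "is_cluster (tau m) p"
    and g: "g \<in> occs (tau m) p" "0 < g" "g < m" and gmin: "\<forall>i \<in> occs (tau m) p. 0 < i \<longrightarrow> g \<le> i"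
  shows "is_cluster (tau m) (drop g p)"
proof -
  let ?O = "occs (tau m) p" and ?O' = "occs (tau m) (drop g p)"
  have gl: "g \<le> length p" using occs_bound[OF m g(1)] by simp
  have O': "a \<in> ?O' \<longleftrightarrow> a + g \<in> ?O" for a using occs_drop[OF gl] .
  have cov: "\<forall>j < length p. \<exists>i \<in> ?O. i \<le> j \<and> j < i + m" and
    ch: "\<forall>i \<in> ?O. \<forall>i' \<in> ?O. i < i' \<and> (\<forall>l \<in> ?O. \<not> (i < l \<and> l < i')) \<longrightarrow> i' < i + m"
    using c unfolding is_cluster_tau[OF m] by blast+
  show ?thesis unfolding is_cluster_tau[OF m]
  proof (intro conjI ballI allI impI)
    fix j assume j: "j < length (drop g p)"
    show "\<exists>i \<in> ?O'. i \<le> j \<and> j < i + m"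
    proof (cases "j < m")
      case True then show ?thesis using O'[of 0] g by force
    next
      case False
      have "j + g < length p" using j by simp
      then have "\<exists>i \<in> ?O. i \<le> j + g \<and> j + g < i + m" using cov by blast
      then obtain i where i: "i \<in> ?O" "i \<le> j + g" "j + g < i + m" by blast
      have "i \<noteq> 0" using i False by auto
      then have "g \<le> i" using gmin i by auto
      then have "i - g \<in> ?O'" "i - g \<le> j" "j < i - g + m" using O'[of "i - g"] i by auto
      then show ?thesis by blast
    qed
  next
    fix a b assume a: "a \<in> ?O'" and b: "b \<in> ?O'" and ab: "a < b \<and> (\<forall>l \<in> ?O'. \<not> (a < l \<and> l < b))"
    have "\<forall>l \<in> ?O. \<not> (a + g < l \<and> l < b + g)"
    proof (intro ballI notI)
      fix l assume l: "l \<in> ?O" "a + g < l \<and> l < b + g"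
      then have "l - g \<in> ?O'" using O'[of "l - g"] by simp
      then show False using ab l by force
    qed
    then have "b + g < a + g + m" using ch a b ab O' by force
    then show "b < a + m" by simp
  qed
qed

lemma cl_back:
  assumes m: "m \<ge> 2" and gl: "g \<le> length p"
    and z: "0 \<in> occs (tau m) p"
    and g: "g \<in> occs (tau m) p" "0 < g" "g < m" and gmin: "\<forall>i \<in> occs (tau m) p. 0 < i \<longrightarrow> g \<le> i"
    and c: "is_cluster (tau m) (drop g p)"
  shows "is_cluster (tau m) p"
proof -
  let ?O = "occs (tau m) p" and ?O' = "occs (tau m) (drop g p)"
  have O': "a \<in> ?O' \<longleftrightarrow> a + g \<in> ?O" for a using occs_drop[OF gl] .
  have cov: "\<forall>j < length (drop g p). \<exists>i \<in> ?O'. i \<le> j \<and> j < i + m" and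
    ch: "\<forall>i \<in> ?O'. \<forall>i' \<in> ?O'. i < i' \<and> (\<forall>l \<in> ?O'. \<not> (i < l \<and> l < i')) \<longrightarrow> i' < i + m"
    using c unfolding is_cluster_tau[OF m] by blast+
  show ?thesis unfolding is_cluster_tau[OF m]
  proof (intro conjI ballI allI impI)
    fix j assume j: "j < length p"
    show "\<exists>i \<in> ?O. i \<le> j \<and> j < i + m"
    proof (cases "j < g")
      case True then show ?thesis using z g by force
    next
      case False
      then have "j - g < length (drop g p)" using j by simp
      then have "\<exists>a \<in> ?O'. a \<le> j - g \<and> j - g < a + m" using cov by blast
      then obtain a where a: "a \<in> ?O'" "a \<le> j - g" "j - g < a + m" by blast
      then have "a + g \<in> ?O" "a + g \<le> j" "j < a + g + m" using O' False by auto
      then show ?thesis by blast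
    qed
  next
    fix i i' assume i: "i \<in> ?O" and i': "i' \<in> ?O" and ii: "i < i' \<and> (\<forall>l \<in> ?O. \<not> (i < l \<and> l < i'))"
    show "i' < i + m"
    proof (cases "i = 0")
      case True
      then have "g \<le> i'" using gmin i' ii by auto
      moreover have "\<not> (g < i')" using ii g True by auto
      ultimately show ?thesis using True g by simp
    next
      case False
      then have gi: "g \<le> i" using gmin i by auto
      have a: "i - g \<in> ?O'" "i' - g \<in> ?O'" using O' gi ii i i' by auto
      have "\<forall>l \<in> ?O'. \<not> (i - g < l \<and> l < i' - g)"
      proof (intro ballI notI)
        fix l assume l: "l \<in> ?O'" "i - g < l \<and> l < i' - g"
        then have "l + g \<in> ?O" using O' by simp
        then show False using ii l gi by force
      qed
      then have "i' - g < i - g + m" using ch a ii gi by force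
      then show ?thesis using gi ii by simp
    qed
  qed
qed

lemma cl_min:
  assumes m: "m \<ge> 4"
  shows "distinct p \<Longrightarrow> is_cluster (tau m) p \<Longrightarrow> length p \<ge> 1 \<Longrightarrow> i < length p \<Longrightarrow> 0 < i \<Longrightarrow> p ! 0 < p ! i"
proof (induction "length p" arbitrary: p i rule: less_induct)
  case less
  have m3: "m \<ge> 3" and m2: "m \<ge> 2" using m by simp_all
  have z: "0 \<in> occs (tau m) p" using cl_zero[OF m2 less.prems(2,3)] .
  have win: "j < m \<Longrightarrow> 0 < j \<Longrightarrow> p ! 0 < p ! j" for j
    using occ_char[OF m3 less.prems(1), of 0] z by simp
  show ?case
  proof (cases "\<exists>i \<in> occs (tau m) p. i \<noteq> 0")
    case False
    then have "length p \<le> m" using cl_single[OF m2 less.prems(2,3)] by blast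
    then show ?thesis using win less.prems by simp
  next
    case True
    obtain g where g: "g \<in> occs (tau m) p" "0 < g" "\<forall>i \<in> occs (tau m) p. 0 < i \<longrightarrow> g \<le> i"
      "g = m - 2 \<or> g = m - 1" using cl_next[OF m less.prems(1,2) True] by blast
    have gm: "g < m" using g(4) m by auto
    have gl: "g + m \<le> length p" using occs_bound[OF m2 g(1)] .
    show ?thesis
    proof (cases "i < m")
      case True then show ?thesis using win less.prems by simp
    next
      case False
      have cd: "is_cluster (tau m) (drop g p)" using cl_drop[OF m2 less.prems(2) g(1,2) gm g(3)] .
      have "drop g p ! 0 < drop g p ! (i - g)"
        using less.hyps[of "drop g p" "i - g"] cd less.prems gm g False gl
        by (simp add: distinct_drop)
      then have "p ! g < p ! i" using gl gm False by simp
      moreover have "p ! 0 < p ! g" using win gm g by simp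
      ultimately show ?thesis by simp
    qed
  qed
qed

definition build :: "nat \<Rightarrow> nat \<Rightarrow> nat list \<Rightarrow> nat list" where
  "build g R p' = pcons 1 (pcons R ((pcons 1 ^^ (g - 2)) p'))"

lemma perms_pos: "p \<in> perms n \<Longrightarrow> x \<in> set p \<Longrightarrow> 1 \<le> x"
  unfolding perms_def by auto

lemma ones_perms: "q \<in> perms n \<Longrightarrow> (pcons 1 ^^ j) q \<in> perms (n + j)"
  by (induction j) (auto intro: pcons_perms)

lemma ones_nth:
  assumes "\<forall>x \<in> set q. 1 \<le> x"
  shows "i < length q + j \<Longrightarrow> ((pcons 1 ^^ j) q) ! i = (if i < j then Suc i else q ! (i - j) + j)"
proof (induction j arbitrary: i)
  case 0 then show ?case by simp
next
  case (Suc j)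
  let ?X = "(pcons 1 ^^ j) q"
  have lenX: "length ?X = length q + j" by (induction j) simp_all
  have posX: "\<forall>x \<in> set ?X. 1 \<le> x"
  proof (induction j)
    case 0 then show ?case using assms by simp
  next
    case (Suc j) then show ?case by (auto simp: pcons_def)
  qed
  show ?case
  proof (cases i)
    case 0 then show ?thesis by (simp add: pcons_def)
  next
    case (Suc i')
    have "i' < length ?X" using Suc.prems Suc lenX by simp
    then have "?X ! i' \<ge> 1" using posX by (simp add: nth_mem)
    then have "((pcons 1 ^^ Suc j) q) ! i = Suc (?X ! i')"
      using \<open>i' < length ?X\<close> Suc by (simp add: pcons_def)
    also have "\<dots> = Suc (if i' < j then Suc i' else q ! (i' - j) + j)"
      using Suc.IH[of i'] Suc.prems Suc by simp
    finally show ?thesis using Suc by auto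
  qed
qed

lemma ones_occs: "i + j \<in> occs sigma ((pcons 1 ^^ j) q) \<longleftrightarrow> i \<in> occs sigma q"
proof (induction j)
  case 0 then show ?case by simp
next
  case (Suc j)
  have "i + Suc j = Suc (i + j)" by simp
  then show ?case using occs_pcons[of "i + j" sigma 1 "(pcons 1 ^^ j) q"] Suc by simp
qed

lemma fpr: "(f ^^ Suc n) x = (f ^^ n) (f x)"
  by (metis comp_apply funpow_Suc_right)

lemma ones_pdec: "(pdec ^^ j) ((pcons 1 ^^ j) q) = q"
proof (induction j)
  case 0 then show ?case by simp
next
  case (Suc j)
  have "(pdec ^^ Suc j) ((pcons 1 ^^ Suc j) q) = (pdec ^^ j) (pdec ((pcons 1 ^^ Suc j) q))" by (rule fpr)
  also have "(pcons 1 ^^ Suc j) q = pcons 1 ((pcons 1 ^^ j) q)" by simp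
  finally show ?case using Suc by simp
qed

lemma build_pdec: "g \<ge> 2 \<Longrightarrow> (pdec ^^ g) (build g R p') = p'"
proof -
  assume g: "g \<ge> 2"
  have "g = Suc (Suc (g - 2))" using g by simp
  then have "(pdec ^^ g) (build g R p') = (pdec ^^ (g - 2)) (pdec (pdec (build g R p')))" by (metis fpr)
  also have "pdec (pdec (build g R p')) = (pcons 1 ^^ (g - 2)) p'" unfolding build_def by (simp only: pdec_pcons)
  also have "(pdec ^^ (g - 2)) \<dots> = p'" by (rule ones_pdec)
  finally show ?thesis .
qed

lemma build_perms:
  assumes "p' \<in> perms n'" "g \<ge> 2" "R \<in> {1..n' + g - 1}"
  shows "build g R p' \<in> perms (n' + g)"
proof -
  have a: "(pcons 1 ^^ (g - 2)) p' \<in> perms (n' + (g - 2))" using assms(1) by (rule ones_perms)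
  have "Suc (n' + (g - 2)) = n' + g - 1" "Suc (n' + g - 1) = n' + g" using assms(2) by simp_all
  then show ?thesis unfolding build_def using pcons_perms[OF _ a, of R] pcons_perms[of 1 "n' + g - 1"] assms
    by (metis atLeastAtMost_iff le_add1 le_numeral_extra(4) plus_1_eq_Suc)
qed

lemma build_inj: "build g R p' = build g R2 p2 \<Longrightarrow> g \<ge> 2 \<Longrightarrow> R = R2 \<and> p' = p2"
proof -
  assume e: "build g R p' = build g R2 p2" and g: "g \<ge> 2"
  have "p' = p2" using build_pdec[OF g, of R p'] build_pdec[OF g, of R2 p2] e by simp
  moreover have "R = R2" using e unfolding build_def by (metis hd_pcons pdec_pcons)
  ultimately show ?thesis by simp
qed

lemma build_nth:
  assumes p': "p' \<in> perms n'" and g: "g \<ge> 2" and R: "R \<ge> 1"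
  shows "build g R p' ! 0 = 1" "build g R p' ! 1 = Suc R"
    "i < n' + (g - 2) \<Longrightarrow> build g R p' ! Suc (Suc i) =
       Suc ((\<lambda>x. if R \<le> x then Suc x else x) (if i < g - 2 then Suc i else p' ! (i - (g - 2)) + (g - 2)))"
proof -
  define L where "L = (pcons 1 ^^ (g - 2)) p'"
  have bL: "build g R p' = pcons 1 (pcons R L)" unfolding build_def L_def ..
  have pos: "\<forall>x \<in> set p'. 1 \<le> x" using perms_pos[OF p'] by blast
  have Lp: "L \<in> perms (n' + (g - 2))" unfolding L_def using ones_perms[OF p'] .
  have lenL: "length L = n' + (g - 2)" using perms_length[OF Lp] .
  have posL: "\<forall>x \<in> set L. 1 \<le> x" using perms_pos[OF Lp] by blast
  show "build g R p' ! 0 = 1" unfolding bL pcons_def by simp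
  show "build g R p' ! 1 = Suc R" unfolding bL pcons_def using R by simp
  assume i: "i < n' + (g - 2)"
  have Li: "L ! i = (if i < g - 2 then Suc i else p' ! (i - (g - 2)) + (g - 2))"
    unfolding L_def using ones_nth[OF pos, of i "g - 2"] i perms_length[OF p'] by simp
  have "L ! i \<ge> 1" using posL i lenL by (simp add: nth_mem)
  then show "build g R p' ! Suc (Suc i) =
       Suc ((\<lambda>x. if R \<le> x then Suc x else x) (if i < g - 2 then Suc i else p' ! (i - (g - 2)) + (g - 2)))"
    unfolding bL pcons_def using i lenL Li by auto
qed

lemma build_occs_shift: "g \<ge> 2 \<Longrightarrow> i + g \<in> occs sigma (build g R p') \<longleftrightarrow> i \<in> occs sigma p'"
proof -
  assume g: "g \<ge> 2"
  have "i + g = Suc (Suc (i + (g - 2)))" using g by simp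
  then show ?thesis unfolding build_def using occs_pcons ones_occs by metis
qed

lemma sh_lt: "((if R \<le> x then Suc x else x) < (if R \<le> y then Suc y else y)) = (x < (y::nat))"
  by auto

lemma sh_ltR: "((if R \<le> x then Suc x else x) < R) = (x < (R::nat))"
  by auto

lemma W_build:
  assumes k: "k \<ge> 2" and p': "p' \<in> perms n'" and h1: "p' ! 0 = 1"
    and g: "g = k \<or> g = Suc k" and n': "n' \<ge> 1" and n2: "g = k \<Longrightarrow> n' \<ge> 2"
    and R: "R \<in> {1..n' + g - 1}"
  shows "0 \<in> occs (tau (Suc (Suc k))) (build g R p') \<longleftrightarrow>
    (if g = Suc k then Suc k \<le> R else p' ! 1 + k - 1 \<le> R)"
proof -
  let ?m = "Suc (Suc k)"
  let ?b = "build g R p'"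
  define sh where "sh x = (if R \<le> x then Suc x else x)" for x :: nat
  define Lf where "Lf i = (if i < g - 2 then Suc i else p' ! (i - (g - 2)) + (g - 2))" for i
  have g2: "g \<ge> 2" using g k by auto
  have bp: "?b \<in> perms (n' + g)" using build_perms[OF p' g2 R] .
  have lb: "length ?b = n' + g" using perms_length[OF bp] .
  have db: "distinct ?b" using bp by (simp add: perms_def)
  have m3: "?m \<ge> 3" using k by simp
  have len: "0 + ?m \<le> length ?b" using lb g n' n2 by auto
  have b0: "?b ! 0 = 1" and b1: "?b ! 1 = Suc R" using build_nth[OF p' g2] R by auto
  have bj: "i < k \<Longrightarrow> ?b ! (0 + Suc (Suc i)) = Suc (sh (Lf i))" for i
    using build_nth(3)[OF p' g2, of R i] R g n' n2 unfolding sh_def Lf_def by auto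
  have A: "\<forall>j. 0 < j \<and> j < ?m \<longrightarrow> ?b ! 0 < ?b ! (0 + j)"
  proof -
    have bp': "?b \<in> perms (Suc (n' + g - 1))" using bp g2 by simp
    have "hd ?b = 1" using b0 lb g2 by (cases ?b) auto
    then have "\<forall>i < Suc (n' + g - 1). 0 < i \<longrightarrow> ?b ! 0 < ?b ! i" using hd_one_iff[OF bp'] by blast
    then show ?thesis using len lb g2 by auto
  qed
  have B: "(\<forall>j. 1 < j \<and> j < ?m \<longrightarrow> ?b ! (0 + j) < ?b ! (0 + 1)) \<longleftrightarrow> (\<forall>i<k. Lf i < R)"
  proof
    assume a: "\<forall>j. 1 < j \<and> j < ?m \<longrightarrow> ?b ! (0 + j) < ?b ! (0 + 1)"
    show "\<forall>i<k. Lf i < R"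
    proof (intro allI impI)
      fix i assume i: "i < k"
      have "?b ! (0 + Suc (Suc i)) < ?b ! (0 + 1)" using a i by simp
      then show "Lf i < R" using bj[OF i] b1 unfolding sh_def by (simp add: sh_ltR[unfolded sh_def])
    qed
  next
    assume a: "\<forall>i<k. Lf i < R"
    show "\<forall>j. 1 < j \<and> j < ?m \<longrightarrow> ?b ! (0 + j) < ?b ! (0 + 1)"
    proof (intro allI impI)
      fix j assume j: "1 < j \<and> j < ?m"
      then obtain i where i: "j = Suc (Suc i)" "i < k" by (cases j; cases "j - 1"; auto)
      show "?b ! (0 + j) < ?b ! (0 + 1)" using bj[OF i(2)] b1 a i unfolding sh_def by auto
    qed
  qed
  have C: "(\<forall>j. 2 \<le> j \<and> Suc j < ?m \<longrightarrow> ?b ! (0 + j) < ?b ! (0 + Suc j)) \<longleftrightarrow> (\<forall>i. Suc i < k \<longrightarrow> Lf i < Lf (Suc i))"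
  proof
    assume a: "\<forall>j. 2 \<le> j \<and> Suc j < ?m \<longrightarrow> ?b ! (0 + j) < ?b ! (0 + Suc j)"
    show "\<forall>i. Suc i < k \<longrightarrow> Lf i < Lf (Suc i)"
    proof (intro allI impI)
      fix i assume i: "Suc i < k"
      have "?b ! (0 + Suc (Suc i)) < ?b ! (0 + Suc (Suc (Suc i)))" using a i by simp
      then show "Lf i < Lf (Suc i)" using bj[of i] bj[of "Suc i"] i unfolding sh_def by (auto split: if_splits)
    qed
  next
    assume a: "\<forall>i. Suc i < k \<longrightarrow> Lf i < Lf (Suc i)"
    show "\<forall>j. 2 \<le> j \<and> Suc j < ?m \<longrightarrow> ?b ! (0 + j) < ?b ! (0 + Suc j)"
    proof (intro allI impI)
      fix j assume j: "2 \<le> j \<and> Suc j < ?m"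
      then obtain i where i: "j = Suc (Suc i)" "Suc i < k" by (cases j; cases "j - 1"; auto)
      have "Lf i < Lf (Suc i)" using a i by simp
      then have "sh (Lf i) < sh (Lf (Suc i))" unfolding sh_def by auto
      then show "?b ! (0 + j) < ?b ! (0 + Suc j)" using bj[of i] bj[of "Suc i"] i by simp
    qed
  qed
  have W: "0 \<in> occs (tau ?m) ?b \<longleftrightarrow> (\<forall>i<k. Lf i < R) \<and> (\<forall>i. Suc i < k \<longrightarrow> Lf i < Lf (Suc i))"
    using occ_char[OF m3 db, of 0] len A B C by simp
  show ?thesis
  proof (cases "g = Suc k")
    case True
    have Lf: "i < k \<Longrightarrow> Lf i = Suc i" for i unfolding Lf_def using True h1 by auto
    have "(\<forall>i<k. Lf i < R) \<longleftrightarrow> Suc k \<le> R"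
    proof
      assume "\<forall>i<k. Lf i < R" then have "Lf (k - 1) < R" using k by simp
      then show "Suc k \<le> R" using Lf[of "k - 1"] k by simp
    next
      assume "Suc k \<le> R" then show "\<forall>i<k. Lf i < R" using Lf by simp
    qed
    moreover have "\<forall>i. Suc i < k \<longrightarrow> Lf i < Lf (Suc i)" using Lf by simp
    ultimately show ?thesis using W True by simp
  next
    case False
    then have gk: "g = k" using g by simp
    have n2': "n' \<ge> 2" using n2 gk by simp
    have p1: "p' ! 1 \<ge> 2"
    proof -
      have lp: "length p' = n'" using perms_length[OF p'] .
      have "p' ! 1 \<in> set p'" using lp n2' by simp
      then have "p' ! 1 \<ge> 1" using perms_pos[OF p'] by blast
      moreover have "p' ! 1 \<noteq> p' ! 0" using p' lp n2' by (simp add: perms_def nth_eq_iff_index_eq)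
      ultimately show ?thesis using h1 by simp
    qed
    have Lf1: "i < k - 1 \<Longrightarrow> Lf i = Suc i" for i unfolding Lf_def using gk h1 by auto
    have Lf2: "Lf (k - 1) = p' ! 1 + k - 2" unfolding Lf_def using gk k by (simp add: Suc_diff_Suc numeral_2_eq_2)
    have "(\<forall>i<k. Lf i < R) \<longleftrightarrow> p' ! 1 + k - 1 \<le> R"
    proof
      assume "\<forall>i<k. Lf i < R" then have "Lf (k - 1) < R" using k by simp
      then show "p' ! 1 + k - 1 \<le> R" using Lf2 k p1 by simp
    next
      assume a: "p' ! 1 + k - 1 \<le> R"
      show "\<forall>i<k. Lf i < R"
      proof (intro allI impI)
        fix i assume i: "i < k"
        show "Lf i < R"
        proof (cases "i < k - 1")
          case True then show ?thesis using Lf1 a p1 by simp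
        next
          case False then have "i = k - 1" using i by simp
          then show ?thesis using Lf2 a p1 k by simp
        qed
      qed
    qed
    moreover have "\<forall>i. Suc i < k \<longrightarrow> Lf i < Lf (Suc i)"
    proof (intro allI impI)
      fix i assume i: "Suc i < k"
      show "Lf i < Lf (Suc i)"
      proof (cases "Suc i < k - 1")
        case True then show ?thesis using Lf1 by simp
      next
        case False then have "Suc i = k - 1" using i by simp
        then show ?thesis using Lf1[of i] Lf2 p1 i by simp
      qed
    qed
    ultimately show ?thesis using W gk k by simp
  qed
qed

lemma occs_finite: "finite (occs sigma p)"
proof -
  have "occs sigma p \<subseteq> {..length p}" unfolding occs_def by auto
  then show ?thesis by (rule finite_subset) simp
qed

lemma build_fwd:
  assumes k: "k \<ge> 2" and g: "g = k \<or> g = Suc k" and p': "p' \<in> perms n'"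
    and R: "R \<in> {1..n' + g - 1}"
    and pc: "(is_cluster (tau (Suc (Suc k))) p' \<and> n' \<ge> 1) \<or> (n' = 1 \<and> g = Suc k)"
    and W: "0 \<in> occs (tau (Suc (Suc k))) (build g R p')"
  shows "occs (tau (Suc (Suc k))) (build g R p') = insert 0 ((\<lambda>i. i + g) ` occs (tau (Suc (Suc k))) p')"
    "is_cluster (tau (Suc (Suc k))) (build g R p')"
    "card (occs (tau (Suc (Suc k))) (build g R p')) = Suc (card (occs (tau (Suc (Suc k))) p'))"
proof -
  let ?m = "Suc (Suc k)"
  let ?b = "build g R p'"
  let ?O = "occs (tau ?m) ?b" and ?O' = "occs (tau ?m) p'"
  have g2: "g \<ge> 2" using g k by linarith
  have m4: "?m \<ge> 4" and m2: "?m \<ge> 2" using k by simp_all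
  have bp: "?b \<in> perms (n' + g)" using build_perms[OF p' g2 R] .
  have lb: "length ?b = n' + g" using perms_length[OF bp] .
  have lp': "length p' = n'" using perms_length[OF p'] .
  have db: "distinct ?b" using bp by (simp add: perms_def)
  have sh: "i + g \<in> ?O \<longleftrightarrow> i \<in> ?O'" for i using build_occs_shift[OF g2] .
  show oc: "?O = insert 0 ((\<lambda>i. i + g) ` ?O')"
  proof (rule set_eqI)
    fix x show "x \<in> ?O \<longleftrightarrow> x \<in> insert 0 ((\<lambda>i. i + g) ` ?O')"
    proof
      assume x: "x \<in> ?O"
      show "x \<in> insert 0 ((\<lambda>i. i + g) ` ?O')"
      proof (cases "x = 0 \<or> g \<le> x")
        case True
        then show ?thesis
        proof
          assume "g \<le> x" then have "x - g \<in> ?O'" "x = (x - g) + g" using sh[of "x - g"] x by simp_all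
          then show ?thesis by blast
        qed simp
      next
        case False
        then have x0: "0 < x" "x < g" by auto
        have "x = 0 + (?m - 2) \<or> x = 0 + (?m - 1)" using overlap[OF m4 db W x] x0 g by auto
        then have xk: "x = k" "g = Suc k" using x0 g by auto
        show ?thesis
        proof (cases "is_cluster (tau ?m) p' \<and> n' \<ge> 1")
          case True
          have "0 \<in> ?O'" using cl_zero[OF m2] True lp' by simp
          then have "g \<in> ?O" using sh[of 0] by simp
          then have "g = x + (?m - 2) \<or> g = x + (?m - 1)" using overlap[OF m4 db x, of g] xk by simp
          then show ?thesis using xk k by simp
        next
          case False
          then have "n' = 1" using pc by auto
          then show ?thesis using occs_bound[OF m2 x] lb xk by simp
        qed
      qed
    next
      assume "x \<in> insert 0 ((\<lambda>i. i + g) ` ?O')"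
      then show "x \<in> ?O" using W sh by auto
    qed
  qed
  show "card ?O = Suc (card ?O')"
  proof -
    have "0 \<notin> (\<lambda>i. i + g) ` ?O'" using g2 by auto
    moreover have "inj_on (\<lambda>i. i + g) ?O'" by (simp add: inj_on_def)
    ultimately show ?thesis unfolding oc using occs_finite by (simp add: card_image)
  qed
  show "is_cluster (tau ?m) ?b"
  proof (cases "is_cluster (tau ?m) p' \<and> n' \<ge> 1")
    case True
    have z': "0 \<in> ?O'" using cl_zero[OF m2] True lp' by simp
    have gO: "g \<in> ?O" using sh[of 0] z' by simp
    have gm: "g < ?m" using g by auto
    have gmin: "\<forall>i \<in> ?O. 0 < i \<longrightarrow> g \<le> i" using oc by auto
    have gl: "g \<le> length ?b" using lb by simp
    have "(pdec ^^ g) ?b \<in> perms (n' + g - g) \<and> order_iso ((pdec ^^ g) ?b) (drop g ?b)"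
      using pdec_pow[OF bp, of g] by simp
    then have "order_iso p' (drop g ?b)" using build_pdec[OF g2] by simp
    then have "is_cluster (tau ?m) (drop g ?b)" using is_cluster_oi True by blast
    then show ?thesis using cl_back[OF m2 gl W gO _ gm gmin] g2 by simp
  next
    case False
    then have n1: "n' = 1" using pc by auto
    have "?O' = {}" using occs_bound[OF m2, of _ p'] lp' n1 by fastforce
    then have "?O = {0}" using oc by simp
    then show ?thesis using cl_single_back[OF m2] lb n1 pc False by simp
  qed
qed

lemma ones_back:
  "x \<in> perms (N + j) \<Longrightarrow> (\<forall>i<j. hd ((pdec ^^ i) x) = 1) \<Longrightarrow> x = (pcons 1 ^^ j) ((pdec ^^ j) x)"
proof (induction j arbitrary: x)
  case 0 then show ?case by simp
next
  case (Suc j)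
  have xp: "x \<in> perms (Suc (N + j))" using Suc.prems by simp
  have h: "hd x = 1" using Suc.prems(2) by force
  have x1: "x = pcons 1 (pdec x)" using pdec_perms(2)[OF xp] h by simp
  have "\<forall>i<j. hd ((pdec ^^ i) (pdec x)) = 1"
  proof (intro allI impI)
    fix i assume "i < j"
    then have "Suc i < Suc j" by simp
    then have "hd ((pdec ^^ Suc i) x) = 1" using Suc.prems(2) by blast
    then show "hd ((pdec ^^ i) (pdec x)) = 1" by (simp only: fpr)
  qed
  then have "pdec x = (pcons 1 ^^ j) ((pdec ^^ j) (pdec x))" using Suc.IH pdec_perms(1)[OF xp] by blast
  then have "x = pcons 1 ((pcons 1 ^^ j) ((pdec ^^ j) (pdec x)))" using x1 by simp
  also have "\<dots> = (pcons 1 ^^ Suc j) ((pdec ^^ Suc j) x)" by (simp only: fpr[where f=pdec and n=j and x=x]) simp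
  finally show ?case .
qed

lemma pdec2: "(pdec ^^ i) (pdec (pdec p)) = (pdec ^^ (i + 2)) p"
proof -
  have "(pdec ^^ (i + 2)) p = ((pdec ^^ i) \<circ> (pdec ^^ 2)) p" by (simp only: funpow_add)
  also have "\<dots> = (pdec ^^ i) (pdec (pdec p))" by (simp add: numeral_2_eq_2)
  finally show ?thesis by simp
qed

lemma build_bwd:
  assumes k: "k \<ge> 2" and p: "p \<in> perms n" and n: "n \<ge> Suc (Suc k)"
    and c: "is_cluster (tau (Suc (Suc k))) p"
  obtains g R p' where "g = k \<or> g = Suc k" "p' \<in> perms (n - g)"
    "(is_cluster (tau (Suc (Suc k))) p' \<and> n - g \<ge> 1) \<or> (n - g = 1 \<and> g = Suc k)"
    "R \<in> {1..n - 1}" "p = build g R p'" "g < n"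
proof -
  let ?m = "Suc (Suc k)"
  let ?O = "occs (tau ?m) p"
  have m4: "?m \<ge> 4" and m3: "?m \<ge> 3" and m2: "?m \<ge> 2" using k by simp_all
  have dp: "distinct p" using p by (simp add: perms_def)
  have lp: "length p = n" using perms_length[OF p] .
  have z: "0 \<in> ?O" using cl_zero[OF m2 c] lp n by simp
  have run0: "2 \<le> a \<Longrightarrow> a < b \<Longrightarrow> b < ?m \<Longrightarrow> p ! a < p ! b" for a b
    using occ_run[OF m3 dp z] by simp
  have "\<exists>g. (g = k \<or> g = Suc k) \<and> (\<forall>j l. 2 \<le> j \<and> j < g \<and> 0 < l \<and> j + l < n \<longrightarrow> p ! j < p ! (j + l)) \<and>
     ((is_cluster (tau ?m) (drop g p) \<and> n - g \<ge> 1) \<or> (n - g = 1 \<and> g = Suc k))"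
  proof (cases "\<exists>i \<in> ?O. i \<noteq> 0")
    case False
    then have "n \<le> ?m" using cl_single[OF m2 c] lp n by auto
    then have nm: "n = ?m" using n by simp
    have "\<forall>j l. 2 \<le> j \<and> j < Suc k \<and> 0 < l \<and> j + l < n \<longrightarrow> p ! j < p ! (j + l)"
      using run0 nm by auto
    then show ?thesis using nm by auto
  next
    case True
    obtain g where g: "g \<in> ?O" "0 < g" "\<forall>i \<in> ?O. 0 < i \<longrightarrow> g \<le> i" "g = ?m - 2 \<or> g = ?m - 1"
      using cl_next[OF m4 dp c True] by blast
    have gm: "g < ?m" using g(4) by auto
    have gl: "g + ?m \<le> n" using occs_bound[OF m2 g(1)] lp by simp
    have cd: "is_cluster (tau ?m) (drop g p)" using cl_drop[OF m2 c g(1,2) gm g(3)] .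
    have SM: "\<forall>j l. 2 \<le> j \<and> j < g \<and> 0 < l \<and> j + l < n \<longrightarrow> p ! j < p ! (j + l)"
    proof (intro allI impI)
      fix j l assume jl: "2 \<le> j \<and> j < g \<and> 0 < l \<and> j + l < n"
      show "p ! j < p ! (j + l)"
      proof (cases "j + l < ?m")
        case True then show ?thesis using run0 jl by simp
      next
        case False
        have "p ! j < p ! g" using run0 jl gm by simp
        moreover have ii: "j + l - g < n - g" "0 < j + l - g" using jl False gm by arith+
        have "drop g p ! 0 < drop g p ! (j + l - g)"
          using cl_min[OF m4, of "drop g p" "j + l - g"] cd dp lp gl ii
          by (simp add: distinct_drop)
        then have "p ! g < p ! (j + l)" using lp gl jl False gm by simp
        ultimately show ?thesis by simp
      qed
    qed
    show ?thesis using SM cd g(4) gl by auto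
  qed
  then obtain g where g: "g = k \<or> g = Suc k"
    and SM: "\<forall>j l. 2 \<le> j \<and> j < g \<and> 0 < l \<and> j + l < n \<longrightarrow> p ! j < p ! (j + l)"
    and cl': "(is_cluster (tau ?m) (drop g p) \<and> n - g \<ge> 1) \<or> (n - g = 1 \<and> g = Suc k)"
    by blast
  have gn: "g < n" using g n by auto
  have g2: "g \<ge> 2" using g k by linarith
  define p' where "p' = (pdec ^^ g) p"
  have pp: "p' \<in> perms (n - g)" "order_iso p' (drop g p)"
    using pdec_pow[OF p, of g] gn unfolding p'_def by simp_all
  have cl'': "(is_cluster (tau ?m) p' \<and> n - g \<ge> 1) \<or> (n - g = 1 \<and> g = Suc k)"
    using cl' is_cluster_oi[OF pp(2)] by simp
  have hdj: "hd ((pdec ^^ j) p) = 1" if j: "2 \<le> j" "j < g" for j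
  proof -
    let ?y = "(pdec ^^ j) p"
    have yp: "?y \<in> perms (n - j)" "order_iso ?y (drop j p)" using pdec_pow[OF p, of j] j gn by simp_all
    have yp': "?y \<in> perms (Suc (n - j - 1))" using yp(1) j gn by (simp add: Suc_diff_Suc)
    have ly: "length ?y = n - j" using perms_length[OF yp(1)] .
    have "\<forall>i < Suc (n - j - 1). 0 < i \<longrightarrow> ?y ! 0 < ?y ! i"
    proof (intro allI impI)
      fix i assume i: "i < Suc (n - j - 1)" "0 < i"
      have "p ! j < p ! (j + i)" using SM j i gn by auto
      then have "drop j p ! 0 < drop j p ! i" using lp j i gn by simp
      then show "?y ! 0 < ?y ! i" using oi_nth[OF yp(2), of 0 i] ly i j gn by simp
    qed
    then show ?thesis using hd_one_iff[OF yp'] by blast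
  qed
  have p1: "p \<in> perms (Suc (n - 1))" using p n by simp
  have hdp: "hd p = 1"
  proof -
    have "\<forall>i < Suc (n - 1). 0 < i \<longrightarrow> p ! 0 < p ! i"
      using cl_min[OF m4 dp c] lp n by auto
    then show ?thesis using hd_one_iff[OF p1] by blast
  qed
  have e1: "p = pcons 1 (pdec p)" using pdec_perms(2)[OF p1] hdp by simp
  have q: "pdec p \<in> perms (Suc (n - 2))" using pdec_perms(1)[OF p1] n by (simp add: numeral_2_eq_2 Suc_diff_Suc)
  define R where "R = hd (pdec p)"
  have R: "R \<in> {1..n - 1}"
  proof -
    have "R \<in> {1..Suc (n - 2)}" using pdec_perms(3)[OF q] unfolding R_def .
    moreover have "Suc (n - 2) = n - 1" using n by simp
    ultimately show ?thesis by simp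
  qed
  have e2: "pdec p = pcons R (pdec (pdec p))" using pdec_perms(2)[OF q] unfolding R_def by simp
  have x: "pdec (pdec p) \<in> perms ((n - g) + (g - 2))" using pdec_perms(1)[OF q] g2 gn by simp
  have "\<forall>i<g - 2. hd ((pdec ^^ i) (pdec (pdec p))) = 1"
  proof (intro allI impI)
    fix i assume "i < g - 2"
    then have "hd ((pdec ^^ (i + 2)) p) = 1" using hdj[of "i + 2"] by simp
    then show "hd ((pdec ^^ i) (pdec (pdec p))) = 1" by (simp only: pdec2)
  qed
  then have e3: "pdec (pdec p) = (pcons 1 ^^ (g - 2)) ((pdec ^^ (g - 2)) (pdec (pdec p)))"
    using ones_back[OF x] by blast
  have gg: "g - 2 + 2 = g" using g2 by simp
  have "(pdec ^^ (g - 2)) (pdec (pdec p)) = p'" by (simp only: pdec2 gg p'_def)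
  then have "p = build g R p'" using e1 e2 e3 unfolding build_def by simp
  then show ?thesis using that g pp(1) cl'' R gn by blast
qed

definition Clus :: "nat \<Rightarrow> nat \<Rightarrow> nat list set" where
  "Clus k n = {p \<in> perms n. is_cluster (tau (Suc (Suc k))) p}"

definition Clus' :: "nat \<Rightarrow> nat \<Rightarrow> nat list set" where
  "Clus' k n = (if n = 1 then perms 1 else Clus k n)"

definition sg :: "nat \<Rightarrow> nat list \<Rightarrow> int" where
  "sg k p = (-1) ^ card (occs (tau (Suc (Suc k))) p)"

definition tt :: "nat \<Rightarrow> nat \<Rightarrow> int" where
  "tt k n = (\<Sum>p \<in> Clus' k n. sg k p)"

definition HH :: "nat \<Rightarrow> nat \<Rightarrow> nat \<Rightarrow> int" where
  "HH k n j = (\<Sum>p \<in> Clus k n. sg k p * int ((n - p ! 1) choose j))"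

lemma finite_Clus: "finite (Clus k n)" unfolding Clus_def using finite_perms by simp
lemma finite_Clus': "finite (Clus' k n)" unfolding Clus'_def using finite_perms finite_Clus by simp

lemma perms1: "perms 1 = {[1]}"
proof (rule set_eqI)
  fix p show "p \<in> perms 1 \<longleftrightarrow> p \<in> {[1]}"
  proof
    assume p: "p \<in> perms 1"
    then have "length p = 1" by (rule perms_length)
    then obtain a where "p = [a]" by (cases p) auto
    then show "p \<in> {[1]}" using p by (simp add: perms_def)
  qed (simp add: perms_def)
qed

lemma Clus_small: "k \<ge> 2 \<Longrightarrow> 1 \<le> n \<Longrightarrow> n < Suc (Suc k) \<Longrightarrow> Clus k n = {}"
proof -
  assume k: "k \<ge> 2" and n: "1 \<le> n" "n < Suc (Suc k)"
  have m2: "Suc (Suc k) \<ge> 2" by simp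
  show ?thesis
  proof (rule ccontr)
    assume "Clus k n \<noteq> {}"
    then obtain p where p: "p \<in> perms n" "is_cluster (tau (Suc (Suc k))) p" unfolding Clus_def by auto
    have l: "length p = n" using perms_length[OF p(1)] .
    have "0 \<in> occs (tau (Suc (Suc k))) p" using cl_zero[OF m2 p(2)] l n by simp
    then show False using occs_bound[OF m2] l n by fastforce
  qed
qed

lemma clus_hd:
  assumes k: "k \<ge> 2" and p: "p \<in> Clus' k n" and n: "n \<ge> 1"
  shows "p ! 0 = 1"
proof (cases "n = 1")
  case True then show ?thesis using p perms1 by (simp add: Clus'_def)
next
  case False
  then have p: "p \<in> perms n" "is_cluster (tau (Suc (Suc k))) p" using p by (auto simp: Clus'_def Clus_def)
  have m4: "Suc (Suc k) \<ge> 4" using k by simp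
  have l: "length p = n" using perms_length[OF p(1)] .
  have d: "distinct p" using p by (simp add: perms_def)
  have p1: "p \<in> perms (Suc (n - 1))" using p n by simp
  have "\<forall>i < Suc (n - 1). 0 < i \<longrightarrow> p ! 0 < p ! i" using cl_min[OF m4 d p(2)] l n by auto
  then have "hd p = 1" using hd_one_iff[OF p1] by blast
  then show ?thesis using l n by (cases p) auto
qed

lemma sum_rev_choose:
  assumes "lo \<le> hi"
  shows "(\<Sum>R\<in>{lo..hi}. (hi - R) choose j) = Suc (hi - lo) choose Suc j"
proof -
  have "(\<Sum>R\<in>{lo..hi}. (hi - R) choose j) = (\<Sum>a\<le>hi - lo. a choose j)"
  proof (rule sum.reindex_bij_witness[where i = "\<lambda>a. hi - a" and j = "\<lambda>R. hi - R"])
    fix a assume "a \<in> {..hi - lo}" then show "hi - (hi - a) = a" "hi - a \<in> {lo..hi}" using assms by auto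
  next
    fix R assume "R \<in> {lo..hi}" then show "hi - (hi - R) = R" "hi - R \<in> {..hi - lo}" by auto
  qed simp
  also have "\<dots> = Suc (hi - lo) choose Suc j" by (rule sum_choose_upper)
  finally show ?thesis .
qed

lemma clus_len: "k \<ge> 2 \<Longrightarrow> p \<in> Clus k n \<Longrightarrow> n \<ge> 1 \<Longrightarrow> n \<ge> Suc (Suc k)"
  using Clus_small[of k n] by (cases "n < Suc (Suc k)") auto

lemma S1_facts:
  assumes k: "k \<ge> 2" and n: "n \<ge> Suc (Suc k)"
    and pR: "p' \<in> Clus' k (n - Suc k)" "R \<in> {Suc k..n - 1}"
  shows "build (Suc k) R p' \<in> Clus k n"
    "card (occs (tau (Suc (Suc k))) (build (Suc k) R p')) = Suc (card (occs (tau (Suc (Suc k))) p'))"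
    "build (Suc k) R p' ! 1 = Suc R"
proof -
  let ?m = "Suc (Suc k)"
  have n1: "n - Suc k \<ge> 1" using n by simp
  have p': "p' \<in> perms (n - Suc k)" using pR(1) by (auto simp: Clus'_def Clus_def split: if_splits)
  have h1: "p' ! 0 = 1" using clus_hd[OF k pR(1) n1] .
  have R': "R \<in> {1..(n - Suc k) + Suc k - 1}" using pR(2) n by simp
  have W: "0 \<in> occs (tau ?m) (build (Suc k) R p')"
    using W_build[OF k p' h1 _ n1 _ R'] pR(2) by simp
  have pc: "(is_cluster (tau ?m) p' \<and> n - Suc k \<ge> 1) \<or> (n - Suc k = 1 \<and> Suc k = Suc k)"
    using pR(1) n1 by (auto simp: Clus'_def Clus_def split: if_splits)
  have "is_cluster (tau ?m) (build (Suc k) R p')" using build_fwd(2)[OF k _ p' R' pc W] by simp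
  moreover have "build (Suc k) R p' \<in> perms n" using build_perms[OF p' _ R'] n k by simp
  ultimately show "build (Suc k) R p' \<in> Clus k n" by (simp add: Clus_def)
  show "card (occs (tau ?m) (build (Suc k) R p')) = Suc (card (occs (tau ?m) p'))"
    using build_fwd(3)[OF k _ p' R' pc W] by simp
  show "build (Suc k) R p' ! 1 = Suc R" using build_nth(2)[OF p', of "Suc k" R] pR(2) k by simp
qed

lemma S2_facts:
  assumes k: "k \<ge> 2" and n: "n \<ge> Suc (Suc k)"
    and pR: "p' \<in> Clus k (n - k)" "R \<in> {p' ! 1 + k - 1..n - 1}"
  shows "build k R p' \<in> Clus k n"
    "card (occs (tau (Suc (Suc k))) (build k R p')) = Suc (card (occs (tau (Suc (Suc k))) p'))"
    "build k R p' ! 1 = Suc R"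
proof -
  let ?m = "Suc (Suc k)"
  have n1: "n - k \<ge> 1" using n by simp
  have n2: "n - k \<ge> 2" using n by simp
  have p': "p' \<in> perms (n - k)" using pR(1) by (auto simp: Clus_def)
  have h1: "p' ! 0 = 1" using clus_hd[OF k _ n1, of p'] pR(1) n2 by (simp add: Clus'_def)
  have R': "R \<in> {1..(n - k) + k - 1}" using pR(2) n k by auto
  have W: "0 \<in> occs (tau ?m) (build k R p')"
    using W_build[OF k p' h1 _ n1 _ R'] pR(2) n2 by simp
  have pc: "(is_cluster (tau ?m) p' \<and> n - k \<ge> 1) \<or> (n - k = 1 \<and> k = Suc k)"
    using pR(1) n1 by (auto simp: Clus_def)
  have "is_cluster (tau ?m) (build k R p')" using build_fwd(2)[OF k _ p' R' pc W] by simp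
  moreover have "build k R p' \<in> perms n" using build_perms[OF p' _ R'] n k by simp
  ultimately show "build k R p' \<in> Clus k n" by (simp add: Clus_def)
  show "card (occs (tau ?m) (build k R p')) = Suc (card (occs (tau ?m) p'))"
    using build_fwd(3)[OF k _ p' R' pc W] by simp
  show "build k R p' ! 1 = Suc R" using build_nth(2)[OF p', of k R] pR(2) k R' by simp
qed

lemma clus_decomp:
  assumes k: "k \<ge> 2" and n: "n \<ge> Suc (Suc k)"
  shows "Clus k n = (\<lambda>(p', R). build (Suc k) R p') ` (SIGMA p':Clus' k (n - Suc k). {Suc k..n - 1})
     \<union> (\<lambda>(p', R). build k R p') ` (SIGMA p':Clus k (n - k). {p' ! 1 + k - 1..n - 1})"
  (is "_ = ?A \<union> ?B")
proof (rule set_eqI)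
  let ?m = "Suc (Suc k)"
  have m2: "?m \<ge> 2" by simp
  fix p
  show "p \<in> Clus k n \<longleftrightarrow> p \<in> ?A \<union> ?B"
  proof
    assume "p \<in> Clus k n"
    then have p: "p \<in> perms n" "is_cluster (tau ?m) p" by (auto simp: Clus_def)
    obtain g R p' where g: "g = k \<or> g = Suc k" and p': "p' \<in> perms (n - g)"
      and cl: "(is_cluster (tau ?m) p' \<and> n - g \<ge> 1) \<or> (n - g = 1 \<and> g = Suc k)"
      and R: "R \<in> {1..n - 1}" and e: "p = build g R p'" and gn: "g < n"
      using build_bwd[OF k p(1) n p(2)] by blast
    have C': "p' \<in> Clus' k (n - g)" using cl p' by (auto simp: Clus'_def Clus_def)
    have h1: "p' ! 0 = 1" using clus_hd[OF k C'] gn by simp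
    have n2: "g = k \<Longrightarrow> n - g \<ge> 2"
    proof -
      assume gk: "g = k"
      then have "is_cluster (tau ?m) p'" "n - g \<ge> 1" using cl k by auto
      then have "p' \<in> Clus k (n - g)" using p' by (simp add: Clus_def)
      then show "n - g \<ge> 2" using clus_len[OF k] \<open>n - g \<ge> 1\<close> by fastforce
    qed
    have R': "R \<in> {1..(n - g) + g - 1}" using R gn by simp
    have W: "0 \<in> occs (tau ?m) (build g R p')" using cl_zero[OF m2 p(2)] e perms_length[OF p(1)] n by simp
    have cond: "if g = Suc k then Suc k \<le> R else p' ! 1 + k - 1 \<le> R"
    proof -
      have "n - g \<ge> 1" using gn by simp
      then show ?thesis using W_build[OF k p' h1 g _ n2 R'] W by blast
    qed
    show "p \<in> ?A \<union> ?B"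
    proof (cases "g = Suc k")
      case True
      then have "(p', R) \<in> (SIGMA p':Clus' k (n - Suc k). {Suc k..n - 1})" using C' cond R by simp
      then show ?thesis using e True by force
    next
      case False
      then have gk: "g = k" using g by simp
      then have "p' \<in> Clus k (n - k)" using cl p' by (auto simp: Clus_def)
      then have "(p', R) \<in> (SIGMA p':Clus k (n - k). {p' ! 1 + k - 1..n - 1})" using cond R False gk by simp
      then show ?thesis using e gk by force
    qed
  next
    assume "p \<in> ?A \<union> ?B"
    then show "p \<in> Clus k n" using S1_facts[OF k n] S2_facts[OF k n] by auto
  qed
qed

lemma AB_disj:
  assumes k: "k \<ge> 2" and n: "n \<ge> Suc (Suc k)"
  shows "(\<lambda>(p', R). build (Suc k) R p') ` (SIGMA p':Clus' k (n - Suc k). {Suc k..n - 1})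
     \<inter> (\<lambda>(p', R). build k R p') ` (SIGMA p':Clus k (n - k). {p' ! 1 + k - 1..n - 1}) = {}"
proof (rule ccontr)
  let ?m = "Suc (Suc k)"
  have m2: "?m \<ge> 2" and m4: "?m \<ge> 4" using k by simp_all
  assume "\<not> ?thesis"
  then obtain x where x1: "x \<in> (\<lambda>(p', R). build (Suc k) R p') ` (SIGMA p':Clus' k (n - Suc k). {Suc k..n - 1})"
     and x2: "x \<in> (\<lambda>(p', R). build k R p') ` (SIGMA p':Clus k (n - k). {p' ! 1 + k - 1..n - 1})" by blast
  from x1 obtain p' R where a: "p' \<in> Clus' k (n - Suc k)" "R \<in> {Suc k..n - 1}" and e1: "x = build (Suc k) R p'"
    by auto
  from x2 obtain p2 R2 where b: "p2 \<in> Clus k (n - k)" "R2 \<in> {p2 ! 1 + k - 1..n - 1}" and e2: "x = build k R2 p2"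
    by auto
  have e: "build (Suc k) R p' = build k R2 p2" using e1 e2 by simp
  let ?x = "build k R2 p2"
  have xC: "?x \<in> Clus k n" using S2_facts(1)[OF k n b] .
  then have dx: "distinct ?x" and lx: "length ?x = n" by (auto simp: Clus_def perms_def intro: perms_length)
  have "0 \<in> occs (tau ?m) p2"
    using cl_zero[OF m2, of p2] b(1) perms_length[of p2 "n - k"] n by (auto simp: Clus_def)
  then have kx: "k \<in> occs (tau ?m) ?x" using build_occs_shift[of k 0 _ R2 p2] k by simp
  show False
  proof (cases "n - Suc k = 1")
    case True
    then show False using occs_bound[OF m2 kx] lx k by simp
  next
    case False
    then have "p' \<in> Clus k (n - Suc k)" using a(1) by (simp add: Clus'_def)
    then have "0 \<in> occs (tau ?m) p'"
      using cl_zero[OF m2, of p'] perms_length[of p' "n - Suc k"] n by (auto simp: Clus_def)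
    then have "0 + Suc k \<in> occs (tau ?m) ?x" using build_occs_shift[of "Suc k" 0 _ R p'] k e by simp
    then have "Suc k = k + (?m - 2) \<or> Suc k = k + (?m - 1)" using overlap[OF m4 dx kx, of "Suc k"] by simp
    then show False using k by simp
  qed
qed

lemma HH_rec:
  assumes k: "k \<ge> 2" and n: "n \<ge> Suc (Suc k)"
  shows "HH k n j = - (int ((n - k - 1) choose (Suc j)) * tt k (n - Suc k) + HH k (n - k) j + HH k (n - k) (Suc j))"
proof -
  define f where "f p = sg k p * int ((n - p ! 1) choose j)" for p
  define S1 where "S1 = (SIGMA p':Clus' k (n - Suc k). {Suc k..n - 1})"
  define S2 where "S2 = (SIGMA p':Clus k (n - k). {p' ! 1 + k - 1..n - 1})"
  define b1 where "b1 = (\<lambda>(p', R). build (Suc k) R p')"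
  define b2 where "b2 = (\<lambda>(p', R). build k R p')"
  have fin1: "finite S1" unfolding S1_def using finite_Clus' by simp
  have fin2: "finite S2" unfolding S2_def using finite_Clus by simp
  have dec: "Clus k n = b1 ` S1 \<union> b2 ` S2" unfolding b1_def b2_def S1_def S2_def by (rule clus_decomp[OF k n])
  have disj: "b1 ` S1 \<inter> b2 ` S2 = {}" unfolding b1_def b2_def S1_def S2_def by (rule AB_disj[OF k n])
  have inj1: "inj_on b1 S1" unfolding b1_def using build_inj k by (auto simp: inj_on_def)
  have inj2: "inj_on b2 S2" unfolding b2_def using build_inj k by (auto simp: inj_on_def)
  have "HH k n j = sum f (b1 ` S1) + sum f (b2 ` S2)"
    unfolding HH_def f_def[symmetric] dec using disj fin1 fin2 by (simp add: sum.union_disjoint)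
  also have "sum f (b1 ` S1) = sum (f \<circ> b1) S1" by (rule sum.reindex[OF inj1])
  also have "\<dots> = (\<Sum>p'\<in>Clus' k (n - Suc k). \<Sum>R\<in>{Suc k..n - 1}. f (build (Suc k) R p'))"
    unfolding S1_def b1_def
    by (subst sum.Sigma) (auto simp: finite_Clus' comp_def split_beta)
  also have "\<dots> = (\<Sum>p'\<in>Clus' k (n - Suc k). - sg k p' * int ((n - k - 1) choose Suc j))"
  proof (rule sum.cong[OF refl])
    fix p' assume p': "p' \<in> Clus' k (n - Suc k)"
    have "(\<Sum>R\<in>{Suc k..n - 1}. f (build (Suc k) R p')) = (\<Sum>R\<in>{Suc k..n - 1}. - sg k p' * int ((n - 1 - R) choose j))"
    proof (rule sum.cong[OF refl])
      fix R assume R: "R \<in> {Suc k..n - 1}"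
      show "f (build (Suc k) R p') = - sg k p' * int ((n - 1 - R) choose j)"
        unfolding f_def sg_def using S1_facts[OF k n p' R] by simp
    qed
    also have "\<dots> = - sg k p' * int (\<Sum>R\<in>{Suc k..n - 1}. (n - 1 - R) choose j)"
      by (simp add: sum_distrib_left)
    also have "(\<Sum>R\<in>{Suc k..n - 1}. (n - 1 - R) choose j) = (n - k - 1) choose Suc j"
    proof -
      have "Suc k \<le> n - 1" using n by simp
      then have "(\<Sum>R\<in>{Suc k..n - 1}. (n - 1 - R) choose j) = Suc (n - 1 - Suc k) choose Suc j" by (rule sum_rev_choose)
      moreover have "Suc (n - 1 - Suc k) = n - k - 1" using n by simp
      ultimately show ?thesis by (simp only:)
    qed
    finally show "(\<Sum>R\<in>{Suc k..n - 1}. f (build (Suc k) R p')) = - sg k p' * int ((n - k - 1) choose Suc j)" .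
  qed
  also have "\<dots> = - (int ((n - k - 1) choose Suc j) * tt k (n - Suc k))"
    unfolding tt_def by (simp add: sum_distrib_left sum_negf mult.commute)
  also have "sum f (b2 ` S2) = sum (f \<circ> b2) S2" by (rule sum.reindex[OF inj2])
  also have "\<dots> = (\<Sum>p'\<in>Clus k (n - k). \<Sum>R\<in>{p' ! 1 + k - 1..n - 1}. f (build k R p'))"
    unfolding S2_def b2_def
    by (subst sum.Sigma) (auto simp: finite_Clus comp_def split_beta)
  also have "\<dots> = (\<Sum>p'\<in>Clus k (n - k). - (sg k p' * int ((n - k - p' ! 1) choose j)) - sg k p' * int ((n - k - p' ! 1) choose Suc j))"
  proof (rule sum.cong[OF refl])
    fix p' assume p': "p' \<in> Clus k (n - k)"
    have "(\<Sum>R\<in>{p' ! 1 + k - 1..n - 1}. f (build k R p')) = (\<Sum>R\<in>{p' ! 1 + k - 1..n - 1}. - sg k p' * int ((n - 1 - R) choose j))"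
    proof (rule sum.cong[OF refl])
      fix R assume R: "R \<in> {p' ! 1 + k - 1..n - 1}"
      show "f (build k R p') = - sg k p' * int ((n - 1 - R) choose j)"
        unfolding f_def sg_def using S2_facts[OF k n p' R] by simp
    qed
    also have "\<dots> = - sg k p' * int (\<Sum>R\<in>{p' ! 1 + k - 1..n - 1}. (n - 1 - R) choose j)"
      by (simp add: sum_distrib_left)
    also have "(\<Sum>R\<in>{p' ! 1 + k - 1..n - 1}. (n - 1 - R) choose j) = Suc (n - k - p' ! 1) choose Suc j"
    proof -
      have pp: "p' \<in> perms (n - k)" using p' by (simp add: Clus_def)
      have l: "length p' = n - k" using perms_length[OF pp] .
      have "p' ! 1 \<in> set p'" using l n by simp
      then have v: "1 \<le> p' ! 1" "p' ! 1 \<le> n - k" using pp by (auto simp: perms_def)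
      have "p' ! 1 + k - 1 \<le> n - 1" using v n by simp
      moreover have "n - 1 - (p' ! 1 + k - 1) = n - k - p' ! 1" using v n by simp
      ultimately show ?thesis using sum_rev_choose[of "p' ! 1 + k - 1" "n - 1" j] by (simp only:)
    qed
    finally show "(\<Sum>R\<in>{p' ! 1 + k - 1..n - 1}. f (build k R p')) = - (sg k p' * int ((n - k - p' ! 1) choose j)) - sg k p' * int ((n - k - p' ! 1) choose Suc j)"
      by (simp add: algebra_simps)
  qed
  also have "\<dots> = - HH k (n - k) j - HH k (n - k) (Suc j)"
    unfolding HH_def by (simp add: sum_subtractf sum_negf)
  finally show ?thesis by simp
qed

definition G :: "nat \<Rightarrow> nat \<Rightarrow> nat \<Rightarrow> nat \<Rightarrow> int" where
  "G k n j h = (if h * k + 2 \<le> n then (-1) ^ h * int ((n - 2 - h * k + h) choose (h + j)) * tt k (n - 1 - h * k) else 0)"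

lemma sum_trunc:
  fixes B A :: nat
  assumes z: "\<And>h. h > B \<Longrightarrow> f h = (0::int)" and BA: "B \<le> A"
  shows "sum f {1..A} = sum f {1..B}"
proof (rule sum.mono_neutral_right)
  show "finite {1..A}" by simp
  show "{1..B} \<subseteq> {1..A}" using BA by auto
  show "\<forall>i\<in>{1..A} - {1..B}. f i = 0" using z by auto
qed

lemma G_vanish:
  assumes k: "k \<ge> 1" and h: "h > n - k - 1"
  shows "G k n j h = 0"
proof -
  have "h * k \<ge> h + k - 1"
  proof -
    have "(h - 1) * (k - 1) \<ge> 0" by simp
    have "h * k = (h - 1) * (k - 1) + h + k - 1" using k h
      by (cases h; cases k) (auto simp: algebra_simps)
    then show ?thesis by simp
  qed
  then have "\<not> h * k + 2 \<le> n" using h k by linarith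
  then show ?thesis unfolding G_def by simp
qed

lemma G_pascal:
  assumes k: "k \<ge> 1" and n: "n \<ge> k + 2" and h: "h \<ge> 1"
  shows "G k (n - k) j h + G k (n - k) (Suc j) h = - G k n j (Suc h)"
proof (cases "h * k + 2 \<le> n - k")
  case True
  have c: "Suc h * k + 2 \<le> n" using True n by (simp add: algebra_simps)
  define x where "x = n - k - 2 - h * k + h"
  have sx: "Suc x = n - 2 - Suc h * k + Suc h" unfolding x_def using True n by (simp add: algebra_simps)
  have tt_eq: "n - k - 1 - h * k = n - 1 - Suc h * k" using True by (simp add: algebra_simps)
  have "G k (n - k) j h + G k (n - k) (Suc j) h = (-1) ^ h * int ((x choose (h + j)) + (x choose Suc (h + j))) * tt k (n - 1 - Suc h * k)"
    unfolding G_def x_def using True tt_eq by (simp add: algebra_simps)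
  also have "(x choose (h + j)) + (x choose Suc (h + j)) = Suc x choose Suc (h + j)" by simp
  also have "(-1) ^ h * int (Suc x choose Suc (h + j)) * tt k (n - 1 - Suc h * k) = - G k n j (Suc h)"
    unfolding G_def sx using c by simp
  finally show ?thesis .
next
  case False
  then have c: "\<not> Suc h * k + 2 \<le> n" using n by (simp add: algebra_simps)
  show ?thesis unfolding G_def using False c by simp
qed

lemma HH_closed:
  assumes k: "k \<ge> 2"
  shows "n \<ge> 2 \<Longrightarrow> HH k n j = (\<Sum>h=1..n. G k n j h)"
proof (induction n arbitrary: j rule: less_induct)
  case (less n)
  show ?case
  proof (cases "n < Suc (Suc k)")
    case True
    have "HH k n j = 0" unfolding HH_def using Clus_small[OF k _ True] less.prems by simp
    moreover have "G k n j h = 0" if "h \<in> {1..n}" for h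
    proof -
      have "1 * k \<le> h * k" using that by (intro mult_le_mono1) simp
      then have "k \<le> h * k" by (simp only: mult_1)
      then have "\<not> h * k + 2 \<le> n" using True by linarith
      then show ?thesis unfolding G_def by simp
    qed
    ultimately show ?thesis by simp
  next
    case False
    then have n: "n \<ge> Suc (Suc k)" by simp
    have k1: "k \<ge> 1" using k by simp
    have IH: "HH k (n - k) i = (\<Sum>h=1..n - k. G k (n - k) i h)" for i
      using less.IH[of "n - k" i] n k by simp
    have "HH k n j = - (int ((n - k - 1) choose (Suc j)) * tt k (n - Suc k)) - (HH k (n - k) j + HH k (n - k) (Suc j))"
      using HH_rec[OF k n, of j] by simp
    also have "HH k (n - k) j + HH k (n - k) (Suc j) = (\<Sum>h=1..n - k. G k (n - k) j h + G k (n - k) (Suc j) h)"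
      unfolding IH by (simp add: sum.distrib)
    also have "\<dots> = (\<Sum>h=1..n - k. - G k n j (Suc h))"
      by (rule sum.cong[OF refl]) (use G_pascal[OF k1] n in auto)
    also have "- (int ((n - k - 1) choose (Suc j)) * tt k (n - Suc k)) = G k n j 1"
    proof -
      have "n - 2 - 1 * k + 1 = n - k - 1" using n by simp
      then show ?thesis unfolding G_def using n by simp
    qed
    finally have "HH k n j = G k n j 1 + (\<Sum>h=1..n - k. G k n j (Suc h))"
      by (simp add: sum_negf)
    also have "(\<Sum>h=1..n - k. G k n j (Suc h)) = (\<Sum>h=Suc 1..Suc (n - k). G k n j h)"
      by (rule sum.shift_bounds_cl_Suc_ivl[symmetric])
    also have "G k n j 1 + \<dots> = (\<Sum>h=1..Suc (n - k). G k n j h)"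
      by (rule sum.atLeast_Suc_atMost[symmetric]) simp
    also have "\<dots> = (\<Sum>h=1..n - k - 1. G k n j h)"
      by (rule sum_trunc) (use G_vanish[OF k1] in auto)
    also have "\<dots> = (\<Sum>h=1..n. G k n j h)"
      by (rule sum_trunc[symmetric]) (use G_vanish[OF k1] in auto)
    finally show ?thesis .
  qed
qed

lemma tt_rec:
  assumes k: "k \<ge> 2" and n: "n \<ge> 2"
  shows "tt k n = (\<Sum>h=1..n. if h * k + 2 \<le> n then (-1) ^ h * int ((n - 2 - h * k + h) choose h) * tt k (n - 1 - h * k) else 0)"
proof -
  have "tt k n = HH k n 0" unfolding tt_def HH_def Clus'_def using n by simp
  also have "\<dots> = (\<Sum>h=1..n. G k n 0 h)" using HH_closed[OF k n] .
  finally show ?thesis unfolding G_def add_0_right .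
qed

lemma tt_1: "tt k 1 = 1"
proof -
  have "occs (tau (Suc (Suc k))) [1] = {}" unfolding occs_def by (auto simp: tau_length)
  then show ?thesis unfolding tt_def Clus'_def sg_def perms1 by simp
qed

lemma tcl_eq:
  assumes k: "k \<ge> 2" and n: "n \<ge> 1"
  shows "t_cl (tau (Suc (Suc k))) n = tt k n"
proof -
  let ?s = "tau (Suc (Suc k))"
  have ls: "length ?s = Suc (Suc k)" by (simp add: tau_length)
  show ?thesis
  proof (cases "n < Suc (Suc k)")
    case True
    have s: "s_cl ?s n j = (if n = 1 \<and> j = 0 then 1 else 0)" for j
      unfolding s_cl_def using True ls by simp
    show ?thesis
    proof (cases "n = 1")
      case True
      then show ?thesis unfolding t_cl_def s using tt_1 by simp
    next
      case False
      have "tt k n = 0" unfolding tt_def Clus'_def using False Clus_small[OF k n True] by simp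
      then show ?thesis unfolding t_cl_def s using False by simp
    qed
  next
    case False
    have s: "s_cl ?s n j = card {p \<in> perms n. is_cluster ?s p \<and> card (occs ?s p) = j}" for j
      unfolding s_cl_def using False ls by simp
    have n1: "n \<noteq> 1" using False by simp
    have img: "(\<lambda>p. card (occs ?s p)) ` Clus k n \<subseteq> {..n}"
    proof
      fix x assume "x \<in> (\<lambda>p. card (occs ?s p)) ` Clus k n"
      then obtain p where p: "p \<in> Clus k n" "x = card (occs ?s p)" by blast
      have l: "length p = n" using p by (auto simp: Clus_def intro: perms_length)
      have "occs ?s p \<subseteq> {..<n}" unfolding occs_def using l ls by auto
      then have "card (occs ?s p) \<le> card {..<n}" by (rule card_mono[rotated]) simp
      then show "x \<in> {..n}" using p by simp
    qed
    have "tt k n = (\<Sum>p\<in>Clus k n. sg k p)" unfolding tt_def Clus'_def using n1 by simp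
    also have "\<dots> = (\<Sum>j\<le>n. \<Sum>p | p \<in> Clus k n \<and> card (occs ?s p) = j. sg k p)"
      by (rule sum.group[symmetric, OF finite_Clus _ img]) simp
    also have "\<dots> = (\<Sum>j\<le>n. (-1) ^ j * int (s_cl ?s n j))"
    proof (rule sum.cong[OF refl])
      fix j
      have "(\<Sum>p | p \<in> Clus k n \<and> card (occs ?s p) = j. sg k p) = (\<Sum>p | p \<in> Clus k n \<and> card (occs ?s p) = j. (-1) ^ j)"
        unfolding sg_def by (rule sum.cong) auto
      also have "\<dots> = (-1) ^ j * int (card {p. p \<in> Clus k n \<and> card (occs ?s p) = j})" by simp
      finally have e: "(\<Sum>p | p \<in> Clus k n \<and> card (occs ?s p) = j. sg k p) = (-1) ^ j * int (card {p. p \<in> Clus k n \<and> card (occs ?s p) = j})" .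
      have se: "{p. p \<in> Clus k n \<and> card (occs ?s p) = j} = {p \<in> perms n. is_cluster ?s p \<and> card (occs ?s p) = j}"
        unfolding Clus_def by auto
      show "(\<Sum>p | p \<in> Clus k n \<and> card (occs ?s p) = j. sg k p) = (-1) ^ j * int (s_cl ?s n j)"
        unfolding s using e se by simp
    qed
    finally show ?thesis unfolding t_cl_def by simp
  qed
qed

unbundle fps_syntax

lemma D_pow_nth:
  fixes k :: nat
  assumes k: "k \<ge> 1"
  shows "(inverse (1 + fps_X ^ k :: rat fps) ^ i) $ M =
     (if k dvd M then (-1) ^ (M div k) * of_nat ((i + M div k - 1) choose (M div k)) else 0)"
proof (induction i arbitrary: M)
  case 0
  show ?case
  proof (cases "M = 0")
    case True then show ?thesis by simp
  next
    case False
    then have "k dvd M \<Longrightarrow> M div k > 0" using k by (auto elim!: dvdE)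
    then show ?thesis using False by auto
  qed
next
  case (Suc i)
  let ?D = "inverse (1 + fps_X ^ k :: rat fps)"
  have D0: "(1 + fps_X ^ k :: rat fps) $ 0 \<noteq> 0" using k by simp
  have eq: "?D ^ Suc i * (1 + fps_X ^ k) = ?D ^ i"
  proof -
    have "?D ^ Suc i * (1 + fps_X ^ k) = ?D ^ i * (?D * (1 + fps_X ^ k))"
      by (simp add: mult_ac)
    also have "\<dots> = ?D ^ i" using inverse_mult_eq_1[OF D0] by simp
    finally show ?thesis .
  qed
  have rec: "(?D ^ Suc i) $ M = (?D ^ i) $ M - (if M < k then 0 else (?D ^ Suc i) $ (M - k))" for M
  proof -
    have "(?D ^ i) $ M = (?D ^ Suc i * (1 + fps_X ^ k)) $ M" by (simp only: eq)
    also have "\<dots> = (?D ^ Suc i) $ M + (fps_X ^ k * ?D ^ Suc i) $ M"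
      by (simp only: distrib_right mult_1_left fps_add_nth mult.commute)
    finally show ?thesis by (simp add: fps_X_power_mult_nth)
  qed
  show ?case
  proof (induction M rule: less_induct)
    case (less M)
    show ?case
    proof (cases "M < k")
      case True
      then have "k dvd M \<longleftrightarrow> M = 0" using k by (auto elim!: dvdE)
      then show ?thesis using rec[of M] True Suc.IH[of M] by auto
    next
      case False
      have kd: "k dvd M \<longleftrightarrow> k dvd (M - k)" using False by (simp add: dvd_diff_nat dvd_minus_self)
      
      show ?thesis
      proof (cases "k dvd M")
        case True
        define q where "q = (M - k) div k"
        have Mq: "M div k = Suc q"
        proof -
          have "M = (M - k) + k" using False by simp
          then have "M div k = ((M - k) + k) div k" by simp
          also have "\<dots> = Suc ((M - k) div k)" using k by simp
          finally show ?thesis unfolding q_def .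
        qed
        have Mk: "(M - k) div k = q" using q_def by simp
        have r1: "(?D ^ Suc i) $ M = (?D ^ i) $ M - (?D ^ Suc i) $ (M - k)" using rec[of M] False by simp
        have r2: "(?D ^ i) $ M = (-1) ^ Suc q * of_nat ((i + Suc q - 1) choose Suc q)"
          using Suc.IH[of M] True Mq by simp
        have r3: "(?D ^ Suc i) $ (M - k) = (-1) ^ q * of_nat ((Suc i + q - 1) choose q)"
          using less[of "M - k"] kd True Mk k False by simp
        have "(?D ^ Suc i) $ M = (-1) ^ Suc q * (of_nat ((i + q) choose Suc q) + of_nat ((i+q) choose q))"
          using r1 r2 r3 by (simp add: algebra_simps)
        also have "\<dots> = (-1) ^ Suc q * of_nat ((Suc i + Suc q - 1) choose Suc q)"
          by (simp add: add.commute)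
        finally show ?thesis using True Mq by simp
      next
        case False
        then show ?thesis using rec[of M] Suc.IH[of M] less[of "M-k"] kd \<open>\<not> M < k\<close> k by auto
      qed
    qed
  qed
qed
definition dco :: "nat \<Rightarrow> nat \<Rightarrow> nat \<Rightarrow> rat" where
  "dco k i M = (if k dvd M then (-1) ^ (M div k) * of_nat ((i + M div k - 1) choose (M div k)) else 0)"

lemma B_eq: "Bm (Suc (Suc k)) = fps_X * inverse (1 + fps_X ^ k)"
  unfolding Bm_def by (simp add: fps_divide_unit)

lemma Bpow_nth:
  assumes k: "k \<ge> 1"
  shows "(Bm (Suc (Suc k)) ^ i) $ N = (if N < i then 0 else dco k i (N - i))"
proof -
  have "Bm (Suc (Suc k)) ^ i = fps_X ^ i * inverse (1 + fps_X ^ k) ^ i"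
    by (simp add: B_eq power_mult_distrib)
  then show ?thesis using D_pow_nth[OF k] by (simp add: fps_X_power_mult_nth dco_def)
qed

lemma TB_nth:
  fixes t :: "nat \<Rightarrow> int" and k :: nat
  assumes k: "k \<ge> 1"
    and rec: "\<And>n. n \<ge> 2 \<Longrightarrow> t n = (\<Sum>h=1..n. if h*k+2 \<le> n then (-1)^h * int ((n - 2 - h*k + h) choose h) * t (n - 1 - h*k) else 0)"
    and N: "N \<ge> 1"
  shows "(Abs_fps (\<lambda>n. if n = 0 then 1 else of_int (t n)) oo Bm (Suc (Suc k))) $ N = of_int (t N + t (N+1))"
proof -
  define T where "T = Abs_fps (\<lambda>n. if n = 0 then 1 else (of_int (t n) :: rat))"
  have "(T oo Bm (Suc (Suc k))) $ N = (\<Sum>i=0..N. T $ i * dco k i (N - i))"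
    by (simp add: fps_compose_nth Bpow_nth[OF k])
  also have "\<dots> = (\<Sum>i=1..N. of_int (t i) * dco k i (N - i))"
  proof -
    have "(\<Sum>i=0..N. T $ i * dco k i (N - i)) = T $ 0 * dco k 0 N + (\<Sum>i=1..N. T $ i * dco k i (N - i))"
      by (simp add: sum.atLeast_Suc_atMost)
    moreover have "dco k 0 N = 0"
    proof (cases "k dvd N")
      case True
      then have "N div k > 0" using N k by (auto elim!: dvdE)
      then show ?thesis by (simp add: dco_def)
    qed (simp add: dco_def)
    ultimately show ?thesis by (simp add: T_def)
  qed
  also have "\<dots> = (\<Sum>i=1..<N. of_int (t i) * dco k i (N - i)) + of_int (t N)"
    using N by (simp add: sum.last_plus dco_def)
  also have "(\<Sum>i=1..<N. of_int (t i) * dco k i (N - i)) = of_int (t (N+1))"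
  proof -
    define A where "A = {h \<in> {1..N+1}. h*k+2 \<le> N+1}"
    define I where "I = {i \<in> {1..<N}. k dvd (N - i)}"
    have "(\<Sum>i=1..<N. of_int (t i) * dco k i (N - i)) = (\<Sum>i\<in>I. of_int (t i) * dco k i (N - i))"
      unfolding I_def by (rule sum.mono_neutral_right) (auto simp: dco_def)
    also have "\<dots> = (\<Sum>h\<in>A. (-1)^h * of_nat ((N + 1 - 2 - h*k + h) choose h) * of_int (t (N + 1 - 1 - h*k)))"
    proof (rule sum.reindex_bij_witness[where i = "\<lambda>h. N - h*k" and j = "\<lambda>i. (N - i) div k"])
      fix i assume "i \<in> I"
      then have i: "1 \<le> i" "i < N" "k dvd (N - i)" by (auto simp: I_def)
      then obtain h where h: "N - i = k*h" by (auto elim!: dvdE)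
      then show "N - (N - i) div k * k = i" using k i by (simp add: mult.commute)
    next
      fix i assume "i \<in> I"
      then have i: "1 \<le> i" "i < N" "k dvd (N - i)" by (auto simp: I_def)
      then obtain h where h: "N - i = k*h" by (auto elim!: dvdE)
      have "h \<ge> 1" using h i by (cases h) auto
      moreover have "h \<le> N"
      proof -
        have "h * 1 \<le> h * k" using k by (rule mult_le_mono2)
        then have "h \<le> N - i" using h by (simp add: mult.commute)
        then show ?thesis by arith
      qed
      ultimately show "(N - i) div k \<in> A" unfolding A_def using h k i by (auto simp: algebra_simps)
    next
      fix h assume "h \<in> A"
      then have h: "h \<ge> 1" "h*k + 2 \<le> N+1" by (auto simp: A_def)
      show "(N - (N - h*k)) div k = h" using h k by simp
    next
      fix h assume "h \<in> A"
      then have h: "h \<ge> 1" "h*k + 2 \<le> N+1" by (auto simp: A_def)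
      have "h*k \<ge> 1" using h k by (simp add: one_le_mult_iff)
      then show "N - h*k \<in> I" unfolding I_def using h by auto
    next
      fix i assume "i \<in> I"
      then have i: "1 \<le> i" "i < N" "k dvd (N - i)" by (auto simp: I_def)
      then obtain h where h: "N - i = k*h" by (auto elim!: dvdE)
      have h1: "h \<ge> 1" using h i by (cases h) auto
      have hd: "(N - i) div k = h" using h k by simp
      have ii: "i = N - h*k" using h i by (simp add: algebra_simps)
      have e2: "N + 1 - 2 - h*k + h = i + h - 1" using ii h1 i by simp
      show "(-1)^((N - i) div k) * of_nat ((N + 1 - 2 - (N - i) div k * k + (N - i) div k) choose ((N - i) div k)) * of_int (t (N + 1 - 1 - (N - i) div k * k)) =
         of_int (t i) * dco k i (N - i)"
        unfolding hd e2 dco_def using h ii by (simp add: algebra_simps)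
    qed
    also have "\<dots> = (\<Sum>h=1..N+1. if h*k+2 \<le> N+1 then (-1)^h * of_nat ((N + 1 - 2 - h*k + h) choose h) * of_int (t (N + 1 - 1 - h*k)) else 0)"
      unfolding A_def by (rule sum.inter_filter) simp
    also have "\<dots> = of_int (t (N+1))"
    proof -
      have "t (N+1) = (\<Sum>h=1..N+1. if h*k+2 \<le> N+1 then (-1)^h * int ((N + 1 - 2 - h*k + h) choose h) * t (N + 1 - 1 - h*k) else 0)"
        using rec[of "N+1"] N by simp
      then have "(of_int (t (N+1)) :: rat) = of_int (\<Sum>h=1..N+1. if h*k+2 \<le> N+1 then (-1)^h * int ((N + 1 - 2 - h*k + h) choose h) * t (N + 1 - 1 - h*k) else 0)"
        by (rule arg_cong)
      also have "\<dots> = (\<Sum>h=1..N+1. of_int (if h*k+2 \<le> N+1 then (-1)^h * int ((N + 1 - 2 - h*k + h) choose h) * t (N + 1 - 1 - h*k) else 0))"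
        by (rule of_int_sum)
      also have "\<dots> = (\<Sum>h=1..N+1. if h*k+2 \<le> N+1 then (-1)^h * of_nat ((N + 1 - 2 - h*k + h) choose h) * of_int (t (N + 1 - 1 - h*k)) else 0)"
        by (intro sum.cong refl) simp
      finally show ?thesis by (rule sym)
    qed
    finally show ?thesis .
  qed
  finally show ?thesis by (simp add: T_def)
qed

lemma Bmj_Suc: "Bmj m (Suc j) = Bm m oo Bmj m j"
  unfolding Bmj_def by simp

lemma Bm0: "Bm m $ 0 = 0"
  unfolding Bm_def by (simp add: fps_divide_unit)

lemma Bmj0: "Bmj m j $ 0 = 0"
  by (induction j) (simp_all add: Bmj_Suc Bm0, simp add: Bmj_def)

lemma prod_vanish:
  fixes c :: "nat \<Rightarrow> rat fps"
  assumes "\<And>j. c j $ 0 = 0"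
  shows "a < N \<Longrightarrow> (\<Prod>j<N. c j) $ a = 0"
proof (induction N arbitrary: a)
  case 0 then show ?case by simp
next
  case (Suc N)
  have "(\<Prod>j<Suc N. c j) $ a = ((\<Prod>j<N. c j) * c N) $ a" by simp
  also have "\<dots> = (\<Sum>i=0..a. (\<Prod>j<N. c j) $ i * c N $ (a - i))" by (rule fps_mult_nth)
  also have "\<dots> = 0"
  proof (intro sum.neutral ballI)
    fix i assume i: "i \<in> {0..a}"
    show "(\<Prod>j<N. c j) $ i * c N $ (a - i) = 0"
    proof (cases "i = a")
      case True then show ?thesis using assms by simp
    next
      case False then show ?thesis using i Suc by simp
    qed
  qed
  finally show ?case .
qed

lemma fps_main:
  fixes t :: "nat \<Rightarrow> int" and k :: nat
  assumes k: "k \<ge> 1" and t1: "t 1 = 1"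
    and rec: "\<And>n. n \<ge> 2 \<Longrightarrow> t n = (\<Sum>h=1..n. if h*k+2 \<le> n then (-1)^h * int ((n - 2 - h*k + h) choose h) * t (n - 1 - h*k) else 0)"
  shows "(\<lambda>n. \<Prod>j\<le>n. Bmj (Suc (Suc k)) j / (1 + Bmj (Suc (Suc k)) j)) sums (Abs_fps (\<lambda>n. if n = 0 then 1 else of_int (t n)) - 1)"
proof -
  define T where "T = Abs_fps (\<lambda>n. if n = 0 then 1 else (of_int (t n) :: rat))"
  define F where "F = T - 1"
  define B where "B = Bm (Suc (Suc k))"
  define Bj where "Bj = Bmj (Suc (Suc k))"
  define c where "c j = Bj j / (1 + Bj j)" for j
  have F0: "F $ 0 = 0" by (simp add: F_def T_def)
  have B0: "B $ 0 = 0" by (simp add: B_def Bm0)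
  have Bj0: "Bj j $ 0 = 0" for j by (simp add: Bj_def Bmj0)
  have FE: "F * (1 + fps_X) = fps_X * (T oo B)"
  proof (rule fps_ext)
    fix n
    show "(F * (1 + fps_X)) $ n = (fps_X * (T oo B)) $ n"
    proof (cases n)
      case 0 then show ?thesis by (simp add: F0)
    next
      case (Suc N)
      have "(F * (1 + fps_X)) $ n = F $ n + (fps_X * F) $ n"
        by (simp add: distrib_left mult.commute)
      also have "\<dots> = of_int (t n) + (if N = 0 then 0 else of_int (t N))"
        using Suc by (simp add: F_def T_def)
      also have "\<dots> = (T oo B) $ N"
      proof (cases "N = 0")
        case True then show ?thesis using Suc t1 by (simp add: T_def)
      next
        case False
        then show ?thesis using TB_nth[OF k rec, of N] Suc by (simp add: T_def B_def)
      qed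
      also have "\<dots> = (fps_X * (T oo B)) $ n" using Suc by simp
      finally show ?thesis .
    qed
  qed
  have one_X: "(1 + fps_X :: rat fps) $ 0 \<noteq> 0" by simp
  have FE2: "F = fps_X * inverse (1 + fps_X) * (1 + (F oo B))"
  proof -
    have "F = F * (1 + fps_X) * inverse (1 + fps_X)"
      using inverse_mult_eq_1'[OF one_X] by (simp add: mult.assoc)
    also have "\<dots> = fps_X * inverse (1 + fps_X) * (T oo B)" using FE by (simp add: mult_ac)
    also have "T oo B = 1 + (F oo B)" by (simp add: F_def fps_compose_sub_distrib)
    finally show ?thesis .
  qed
  have step: "F oo Bj j = c j * (1 + (F oo Bj (Suc j)))" for j
  proof -
    have "F oo Bj j = (fps_X oo Bj j) * (inverse (1 + fps_X) oo Bj j) * ((1 + (F oo B)) oo Bj j)"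
      by (subst FE2) (simp add: fps_compose_mult_distrib[OF Bj0])
    also have "fps_X oo Bj j = Bj j" using Bj0 by simp
    also have "inverse (1 + fps_X) oo Bj j = inverse (1 + Bj j)"
      by (simp add: fps_inverse_compose[OF Bj0 one_X] fps_compose_add_distrib Bj0)
    also have "(1 + (F oo B)) oo Bj j = 1 + (F oo Bj (Suc j))"
    proof -
      have "Bj (Suc j) = B oo Bj j" by (simp add: Bj_def B_def Bmj_Suc)
      then show ?thesis by (simp add: fps_compose_add_distrib fps_compose_assoc[OF Bj0 B0])
    qed
    finally show ?thesis
      by (simp add: c_def fps_divide_unit Bj0)
  qed
  define Q where "Q N = (\<Prod>j<N. c j) * (F oo Bj N)" for N
  have decomp: "F = (\<Sum>n<N. \<Prod>j\<le>n. c j) + Q N" for N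
  proof (induction N)
    case 0 then show ?case by (simp add: Q_def Bj_def Bmj_def)
  next
    case (Suc N)
    have "Q N = (\<Prod>j\<le>N. c j) + Q (Suc N)"
      unfolding Q_def step[of N] by (simp add: lessThan_Suc_atMost[symmetric] algebra_simps)
    then show ?case using Suc by simp
  qed
  have c0: "c j $ 0 = 0" for j by (simp add: c_def fps_divide_unit Bj0)
  have Qv: "a < N \<Longrightarrow> Q N $ a = 0" for a N
  proof -
    assume aN: "a < N"
    have "Q N $ a = (\<Sum>i=0..a. (\<Prod>j<N. c j) $ i * (F oo Bj N) $ (a - i))"
      unfolding Q_def by (rule fps_mult_nth)
    also have "\<dots> = 0" using prod_vanish[OF c0] aN by (intro sum.neutral) auto
    finally show ?thesis .
  qed
  have "(\<lambda>N. \<Sum>n<N. \<Prod>j\<le>n. c j) \<longlonglongrightarrow> F"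
  proof (rule tendsto_fpsI)
    fix a
    show "\<forall>\<^sub>F N in sequentially. (\<Sum>n<N. \<Prod>j\<le>n. c j) $ a = F $ a"
    proof (rule eventually_sequentiallyI[of "Suc a"])
      fix N assume "Suc a \<le> N"
      then have "Q N $ a = 0" using Qv by simp
      then show "(\<Sum>n<N. \<Prod>j\<le>n. c j) $ a = F $ a"
        using decomp[of N] by (metis add.right_neutral fps_add_nth)
    qed
  qed
  then show ?thesis unfolding sums_def c_def Bj_def F_def T_def .
qed

theorem theorem2p9:
  fixes m :: nat
  assumes "m \<ge> 4"
  shows "(\<lambda>n. \<Prod>j\<le>n. Bmj m j / (1 + Bmj m j)) sums (T_cl (tau m) - 1)"
proof -
  define k where "k = m - 2"
  have mk: "m = Suc (Suc k)" and k: "k \<ge> 2" using assms unfolding k_def by simp_all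
  have T: "T_cl (tau (Suc (Suc k))) = Abs_fps (\<lambda>n. if n = 0 then 1 else of_int (tt k n))"
    unfolding T_cl_def by (rule fps_ext) (simp add: tcl_eq[OF k])
  have k1: "k \<ge> 1" using k by simp
  show ?thesis unfolding mk T
    by (rule fps_main[where t="tt k", OF k1 tt_1]) (rule tt_rec[OF k])
qed

end
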